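(* Let $1<p,q<\infty$, $r>1$, and $X=\bigoplus_{\ell_p}\ell_q^n$. Let $F:X\to\mathbb{R}$ be uniformly $H^r$-smooth. For each $n$ let $F_n=F\circ i_n\circ\pi_n:\ell_q\to\mathbb{R}$. Then there is a subsequence $(F_{n_j})_j$ of $(F_n)_n$ which converges pointwise on $\ell_q$ to a uniformly $H^r$-smooth function $F^*:\ell_q\to\mathbb{R}$.
   Context: $\bigoplus_{\ell_p}\ell_q^n$ is the space of sequences $x=(x_n)_{n\ge1}$ with $x_n\in\ell_q^n$ and $\|x\|=(\sum_n\|x_n\|_q^p)^{1/p}<\infty$. $\pi_n:\ell_q\to\ell_q^n$ is the projection onto the first $n$ coordinates, and $i_n:\ell_q^n\to X$ is the isometric inclusion of $\ell_q^n$ as the $n$-th summand of $X$. For real $s>1$, with $k$ the largest integer strictly less than $s$, $g$ is uniformly $H^s$-smooth if it is $C^k$ and there is $M>0$ with $\|g^{(k)}(y)-g^{(k)}(z)\|\le M\|y-z\|^{s-k}$ for all $y,z$. *)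

theory Defs
  imports "HOL-Analysis.Analysis"
begin

(* Vectors are real-valued functions on an index type 'i, with pointwise operations.
   A normed space is given by a carrier V :: ('i => real) set (a linear subspace)
   and a norm N on it. *)

definition vadd :: "('i \<Rightarrow> real) \<Rightarrow> ('i \<Rightarrow> real) \<Rightarrow> ('i \<Rightarrow> real)" where
  "vadd x y = (\<lambda>i. x i + y i)"

definition vdiff :: "('i \<Rightarrow> real) \<Rightarrow> ('i \<Rightarrow> real) \<Rightarrow> ('i \<Rightarrow> real)" where
  "vdiff x y = (\<lambda>i. x i - y i)"

definition vscale :: "real \<Rightarrow> ('i \<Rightarrow> real) \<Rightarrow> ('i \<Rightarrow> real)" where
  "vscale a x = (\<lambda>i. a * x i)"

(* T :: ('i => real) list => real, viewed as a j-linear form in its j list arguments *)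
definition multilinear_on ::
  "('i \<Rightarrow> real) set \<Rightarrow> nat \<Rightarrow> (('i \<Rightarrow> real) list \<Rightarrow> real) \<Rightarrow> bool" where
  "multilinear_on V j T \<longleftrightarrow>
     (\<forall>as bs x y a b. length as + length bs + 1 = j \<and> set as \<subseteq> V \<and> set bs \<subseteq> V
        \<and> x \<in> V \<and> y \<in> V \<longrightarrow>
        T (as @ vadd (vscale a x) (vscale b y) # bs) = a * T (as @ x # bs) + b * T (as @ y # bs))"

definition bounded_multilinear_on ::
  "('i \<Rightarrow> real) set \<Rightarrow> (('i \<Rightarrow> real) \<Rightarrow> real) \<Rightarrow> nat \<Rightarrow> (('i \<Rightarrow> real) list \<Rightarrow> real) \<Rightarrow> bool" where
  "bounded_multilinear_on V N j T \<longleftrightarrow> multilinear_on V j T \<and>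
     (\<exists>C. \<forall>hs. length hs = j \<and> set hs \<subseteq> V \<longrightarrow> \<bar>T hs\<bar> \<le> C * prod_list (map N hs))"

definition mnorm ::
  "('i \<Rightarrow> real) set \<Rightarrow> (('i \<Rightarrow> real) \<Rightarrow> real) \<Rightarrow> nat \<Rightarrow> (('i \<Rightarrow> real) list \<Rightarrow> real) \<Rightarrow> real" where
  "mnorm V N j T = Sup {\<bar>T hs\<bar> | hs. length hs = j \<and> set hs \<subseteq> V \<and> (\<forall>h\<in>set hs. N h \<le> 1)}"

(* Frechet derivative of y \<mapsto> D y (a j-linear form) at y is h \<mapsto> (hs \<mapsto> D' (h # hs)),
   measured in the operator norm of j-linear forms *)
definition has_mderiv_at ::
  "('i \<Rightarrow> real) set \<Rightarrow> (('i \<Rightarrow> real) \<Rightarrow> real) \<Rightarrow> nat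
   \<Rightarrow> (('i \<Rightarrow> real) \<Rightarrow> ('i \<Rightarrow> real) list \<Rightarrow> real) \<Rightarrow> (('i \<Rightarrow> real) list \<Rightarrow> real)
   \<Rightarrow> ('i \<Rightarrow> real) \<Rightarrow> bool" where
  "has_mderiv_at V N j D D' y \<longleftrightarrow>
     (\<forall>\<epsilon>>0. \<exists>\<delta>>0. \<forall>h\<in>V. N h < \<delta> \<longrightarrow>
        mnorm V N j (\<lambda>hs. D (vadd y h) hs - D y hs - D' (h # hs)) \<le> \<epsilon> * N h)"

(* uniformly H^s-smooth: C^k with k the largest integer < s, k-th derivative (s-k)-Hoelder *)
definition uniformly_H_smooth ::
  "('i \<Rightarrow> real) set \<Rightarrow> (('i \<Rightarrow> real) \<Rightarrow> real) \<Rightarrow> real \<Rightarrow> (('i \<Rightarrow> real) \<Rightarrow> real) \<Rightarrow> bool" where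
  "uniformly_H_smooth V N s f \<longleftrightarrow>
     (let k = nat (\<lceil>s\<rceil> - 1) in
      \<exists>(D :: nat \<Rightarrow> ('i \<Rightarrow> real) \<Rightarrow> ('i \<Rightarrow> real) list \<Rightarrow> real) M.
        M > 0
      \<and> (\<forall>y\<in>V. D 0 y [] = f y)
      \<and> (\<forall>j\<le>k. \<forall>y\<in>V. bounded_multilinear_on V N j (D j y))
      \<and> (\<forall>j<k. \<forall>y\<in>V. has_mderiv_at V N j (D j) (D (Suc j) y) y)
      \<and> (\<forall>y\<in>V. \<forall>z\<in>V. mnorm V N k (\<lambda>hs. D k y hs - D k z hs) \<le> M * N (vdiff y z) powr (s - real k)))"

definition lq :: "real \<Rightarrow> (nat \<Rightarrow> real) set" where
  "lq q = {x. summable (\<lambda>i. \<bar>x i\<bar> powr q)}"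

definition lq_norm :: "real \<Rightarrow> (nat \<Rightarrow> real) \<Rightarrow> real" where
  "lq_norm q x = (\<Sum>i. \<bar>x i\<bar> powr q) powr (1 / q)"

(* X = (\<Sum> \<oplus> ell_q^n)_{ell_p}: x (n, i) is the i-th coordinate (i < n) of the n-th summand *)
definition Xsp :: "real \<Rightarrow> real \<Rightarrow> (nat \<times> nat \<Rightarrow> real) set" where
  "Xsp p q = {x. (\<forall>n i. n \<le> i \<longrightarrow> x (n, i) = 0) \<and>
      summable (\<lambda>n. ((\<Sum>i<n. \<bar>x (n, i)\<bar> powr q) powr (1 / q)) powr p)}"

definition X_norm :: "real \<Rightarrow> real \<Rightarrow> (nat \<times> nat \<Rightarrow> real) \<Rightarrow> real" where
  "X_norm p q x = (\<Sum>n. ((\<Sum>i<n. \<bar>x (n, i)\<bar> powr q) powr (1 / q)) powr p) powr (1 / p)"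

definition proj_n :: "nat \<Rightarrow> (nat \<Rightarrow> real) \<Rightarrow> (nat \<Rightarrow> real)" where
  "proj_n n y = (\<lambda>i. if i < n then y i else 0)"

definition incl_n :: "nat \<Rightarrow> (nat \<Rightarrow> real) \<Rightarrow> (nat \<times> nat \<Rightarrow> real)" where
  "incl_n n v = (\<lambda>(m, i). if m = n \<and> i < n then v i else 0)"

end

theory Submission
  imports Defs "HOL-Library.Diagonal_Subsequence"
begin



lemma vadd_apply[simp]: "vadd x y i = x i + y i" by (simp add: vadd_def)
lemma vdiff_apply[simp]: "vdiff x y i = x i - y i" by (simp add: vdiff_def)
lemma vscale_apply[simp]: "vscale c x i = c * x i" by (simp add: vscale_def)

definition fb :: "('i \<Rightarrow> real) set \<Rightarrow> (('i \<Rightarrow> real) \<Rightarrow> real) \<Rightarrow> nat \<Rightarrow> (('i \<Rightarrow> real) list \<Rightarrow> real) \<Rightarrow> real \<Rightarrow> bool" where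
  "fb V N j T b \<longleftrightarrow> (\<forall>hs. length hs = j \<and> set hs \<subseteq> V \<longrightarrow> \<bar>T hs\<bar> \<le> b * prod_list (map N hs))"

lemma bml_iff: "bounded_multilinear_on V N j T \<longleftrightarrow> multilinear_on V j T \<and> (\<exists>C. fb V N j T C)"
  by (simp add: bounded_multilinear_on_def fb_def)

lemma ml_homog:
  assumes "multilinear_on V j T" "length as + length bs + 1 = j" "set as \<subseteq> V" "set bs \<subseteq> V" "x \<in> V"
  shows "T (as @ vscale c x # bs) = c * T (as @ x # bs)"
proof -
  have "vadd (vscale c x) (vscale 0 x) = vscale c x" by (simp add: fun_eq_iff)
  from assms have "T (as @ vadd (vscale c x) (vscale 0 x) # bs) = c * T (as @ x # bs) + 0 * T (as @ x # bs)"
    unfolding multilinear_on_def by blast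
  with \<open>vadd (vscale c x) (vscale 0 x) = vscale c x\<close> show ?thesis by simp
qed

lemma ml_diff:
  assumes "multilinear_on V j T" "length as + length bs + 1 = j" "set as \<subseteq> V" "set bs \<subseteq> V" "x \<in> V" "y \<in> V"
  shows "T (as @ vdiff x y # bs) = T (as @ x # bs) - T (as @ y # bs)"
proof -
  have "vadd (vscale 1 x) (vscale (-1) y) = vdiff x y" by (simp add: fun_eq_iff)
  from assms have "T (as @ vadd (vscale 1 x) (vscale (-1) y) # bs) = 1 * T (as @ x # bs) + (-1) * T (as @ y # bs)"
    unfolding multilinear_on_def by blast
  with \<open>vadd (vscale 1 x) (vscale (-1) y) = vdiff x y\<close> show ?thesis by simp
qed

lemma ml_lincomb:
  assumes "multilinear_on V j T1" "multilinear_on V j T2"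
  shows "multilinear_on V j (\<lambda>hs. a * T1 hs + b * T2 hs)"
  using assms unfolding multilinear_on_def by (simp add: algebra_simps)

lemma ml_diff3:
  assumes "multilinear_on V j T1" "multilinear_on V j T2" "multilinear_on V j T3"
  shows "multilinear_on V j (\<lambda>hs. T1 hs - T2 hs - T3 hs)"
  using assms unfolding multilinear_on_def by (simp add: algebra_simps)

lemma ml_diff2:
  assumes "multilinear_on V j T1" "multilinear_on V j T2"
  shows "multilinear_on V j (\<lambda>hs. T1 hs - T2 hs)"
  using assms unfolding multilinear_on_def by (simp add: algebra_simps)

lemma ml_cons:
  assumes "multilinear_on V (Suc j) T" "h \<in> V"
  shows "multilinear_on V j (\<lambda>hs. T (h # hs))"
  unfolding multilinear_on_def
proof (intro allI impI)
  fix as bs x y a b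
  assume H: "length as + length bs + 1 = j \<and> set as \<subseteq> V \<and> set bs \<subseteq> V \<and> x \<in> V \<and> y \<in> V"
  have "T ((h # as) @ vadd (vscale a x) (vscale b y) # bs) = a * T ((h # as) @ x # bs) + b * T ((h # as) @ y # bs)"
    using assms(1)[unfolded multilinear_on_def, rule_format, of "h # as" bs x y a b] H \<open>h \<in> V\<close> by auto
  then show "T (h # as @ vadd (vscale a x) (vscale b y) # bs) = a * T (h # as @ x # bs) + b * T (h # as @ y # bs)"
    by simp
qed

lemma prod_list_nonneg:
  fixes N N' :: "'a \<Rightarrow> real"
  assumes "\<And>h. h \<in> set hs \<Longrightarrow> 0 \<le> N h"
  shows "0 \<le> prod_list (map N hs)"
  using assms by (induction hs) auto

lemma prod_list_le1:
  fixes N N' :: "'a \<Rightarrow> real"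
  assumes "\<And>h. h \<in> set hs \<Longrightarrow> 0 \<le> N h \<and> N h \<le> 1"
  shows "prod_list (map N hs) \<le> 1"
  using assms
proof (induction hs)
  case (Cons a hs)
  have "0 \<le> prod_list (map N hs)" using Cons.prems by (intro prod_list_nonneg) auto
  moreover have "prod_list (map N hs) \<le> 1" using Cons by auto
  moreover have "0 \<le> N a" "N a \<le> 1" using Cons.prems by auto
  ultimately show ?case by (simp add: mult_le_one)
qed simp

lemma prod_list_mono:
  fixes N N' :: "'a \<Rightarrow> real"
  assumes "\<And>h. h \<in> set hs \<Longrightarrow> 0 \<le> N h \<and> N h \<le> N' h"
  shows "prod_list (map N hs) \<le> prod_list (map N' hs)"
  using assms
proof (induction hs)
  case (Cons a hs)
  have "0 \<le> prod_list (map N hs)" using Cons.prems by (intro prod_list_nonneg) auto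
  moreover have "prod_list (map N hs) \<le> prod_list (map N' hs)" using Cons by auto
  moreover have "0 \<le> N a" "N a \<le> N' a" using Cons.prems by auto
  ultimately show ?case by (simp add: mult_mono)
qed simp

lemma prod_list_le_pow:
  fixes N N' :: "'a \<Rightarrow> real"
  assumes "\<And>h. h \<in> set hs \<Longrightarrow> 0 \<le> N h \<and> N h \<le> B"
  shows "prod_list (map N hs) \<le> B ^ length hs"
  using assms
proof (induction hs)
  case (Cons a hs)
  have "0 \<le> prod_list (map N hs)" using Cons.prems by (intro prod_list_nonneg) auto
  moreover have "prod_list (map N hs) \<le> B ^ length hs" using Cons by auto
  moreover have "0 \<le> N a" "N a \<le> B" using Cons.prems by auto
  ultimately show ?case by (simp add: mult_mono)
qed simp

lemma prod_list_inv:
  fixes N :: "'a \<Rightarrow> real"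
  shows "prod_list (map (\<lambda>h. 1 / N h) hs) = 1 / prod_list (map N hs)"
  by (induction hs) auto

lemma fb_cons:
  assumes "fb V N (Suc j) T C" "h \<in> V"
  shows "fb V N j (\<lambda>hs. T (h # hs)) (C * N h)"
  unfolding fb_def
proof (intro allI impI)
  fix hs :: "('a \<Rightarrow> real) list" assume H: "length hs = j \<and> set hs \<subseteq> V"
  have "\<bar>T (h # hs)\<bar> \<le> C * prod_list (map N (h # hs))"
    using assms H unfolding fb_def by (metis insert_subset length_Cons list.set(2))
  then show "\<bar>T (h # hs)\<bar> \<le> C * N h * prod_list (map N hs)" by (simp add: mult.assoc)
qed

lemma fb_mono:
  assumes "fb V N j T C" "C \<le> C'" "\<And>h. h \<in> V \<Longrightarrow> 0 \<le> N h"
  shows "fb V N j T C'"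
  unfolding fb_def
proof (intro allI impI)
  fix hs assume H: "length hs = j \<and> set hs \<subseteq> V"
  with assms have "\<bar>T hs\<bar> \<le> C * prod_list (map N hs)" "0 \<le> prod_list (map N hs)"
    unfolding fb_def by (auto intro!: prod_list_nonneg)
  then show "\<bar>T hs\<bar> \<le> C' * prod_list (map N hs)" using \<open>C \<le> C'\<close> by (meson mult_right_mono order_trans)
qed

lemma fb_diff3:
  assumes "fb V N j T1 C1" "fb V N j T2 C2" "fb V N j T3 C3"
  shows "fb V N j (\<lambda>hs. T1 hs - T2 hs - T3 hs) (C1 + C2 + C3)"
  unfolding fb_def
proof (intro allI impI)
  fix hs assume H: "length hs = j \<and> set hs \<subseteq> V"
  have "\<bar>T1 hs\<bar> \<le> C1 * prod_list (map N hs)" "\<bar>T2 hs\<bar> \<le> C2 * prod_list (map N hs)" "\<bar>T3 hs\<bar> \<le> C3 * prod_list (map N hs)"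
    using assms H unfolding fb_def by auto
  then show "\<bar>T1 hs - T2 hs - T3 hs\<bar> \<le> (C1 + C2 + C3) * prod_list (map N hs)" by (simp add: distrib_right)
qed

lemma fb_diff2:
  assumes "fb V N j T1 C1" "fb V N j T2 C2"
  shows "fb V N j (\<lambda>hs. T1 hs - T2 hs) (C1 + C2)"
  unfolding fb_def
proof (intro allI impI)
  fix hs assume H: "length hs = j \<and> set hs \<subseteq> V"
  have "\<bar>T1 hs\<bar> \<le> C1 * prod_list (map N hs)" "\<bar>T2 hs\<bar> \<le> C2 * prod_list (map N hs)"
    using assms H unfolding fb_def by auto
  then show "\<bar>T1 hs - T2 hs\<bar> \<le> (C1 + C2) * prod_list (map N hs)" by (simp add: distrib_right)
qed

lemma bml_diff3:
  assumes "bounded_multilinear_on V N j T1" "bounded_multilinear_on V N j T2" "bounded_multilinear_on V N j T3"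
  shows "bounded_multilinear_on V N j (\<lambda>hs. T1 hs - T2 hs - T3 hs)"
  using assms unfolding bml_iff using ml_diff3 fb_diff3 by blast

lemma bml_diff2:
  assumes "bounded_multilinear_on V N j T1" "bounded_multilinear_on V N j T2"
  shows "bounded_multilinear_on V N j (\<lambda>hs. T1 hs - T2 hs)"
  using assms unfolding bml_iff using ml_diff2 fb_diff2 by blast

lemma bml_cons:
  assumes "bounded_multilinear_on V N (Suc j) T" "h \<in> V"
  shows "bounded_multilinear_on V N j (\<lambda>hs. T (h # hs))"
  using assms unfolding bml_iff using ml_cons fb_cons by blast

lemma mnorm_set_bdd:
  assumes "fb V N j T C" "\<And>h. h \<in> V \<Longrightarrow> 0 \<le> N h"
  shows "bdd_above {\<bar>T hs\<bar> | hs. length hs = j \<and> set hs \<subseteq> V \<and> (\<forall>h\<in>set hs. N h \<le> 1)}"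
proof (rule bdd_aboveI)
  fix x assume "x \<in> {\<bar>T hs\<bar> | hs. length hs = j \<and> set hs \<subseteq> V \<and> (\<forall>h\<in>set hs. N h \<le> 1)}"
  then obtain hs where hs: "x = \<bar>T hs\<bar>" "length hs = j" "set hs \<subseteq> V" "\<forall>h\<in>set hs. N h \<le> 1" by blast
  have P0: "0 \<le> prod_list (map N hs)" using hs assms(2) by (intro prod_list_nonneg) auto
  have P1: "prod_list (map N hs) \<le> 1" using hs assms(2) by (intro prod_list_le1) auto
  have "x \<le> C * prod_list (map N hs)" using assms(1) hs unfolding fb_def by auto
  also have "\<dots> \<le> \<bar>C\<bar> * prod_list (map N hs)" using P0 by (intro mult_right_mono) auto
  also have "\<dots> \<le> \<bar>C\<bar> * 1" using P1 by (intro mult_left_mono) auto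
  finally show "x \<le> \<bar>C\<bar> * 1" .
qed

lemma mnorm_le:
  assumes "(\<lambda>_. 0) \<in> V" "N (\<lambda>_. 0) \<le> 1"
    and "\<And>hs. length hs = j \<Longrightarrow> set hs \<subseteq> V \<Longrightarrow> (\<forall>h\<in>set hs. N h \<le> 1) \<Longrightarrow> \<bar>T hs\<bar> \<le> B"
  shows "mnorm V N j T \<le> B"
  unfolding mnorm_def
proof (rule cSup_least)
  show "{\<bar>T hs\<bar> |hs. length hs = j \<and> set hs \<subseteq> V \<and> (\<forall>h\<in>set hs. N h \<le> 1)} \<noteq> {}"
  proof -
    have "\<bar>T (replicate j (\<lambda>_. 0))\<bar> \<in> {\<bar>T hs\<bar> |hs. length hs = j \<and> set hs \<subseteq> V \<and> (\<forall>h\<in>set hs. N h \<le> 1)}"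
      using assms(1,2) by (intro CollectI exI[of _ "replicate j (\<lambda>_. 0)"]) auto
    then show ?thesis by blast
  qed
qed (use assms(3) in auto)

lemma mnorm_upper:
  assumes "fb V N j T C" "\<And>h. h \<in> V \<Longrightarrow> 0 \<le> N h"
    "length hs = j" "set hs \<subseteq> V" "\<forall>h\<in>set hs. N h \<le> 1"
  shows "\<bar>T hs\<bar> \<le> mnorm V N j T"
  unfolding mnorm_def by (rule cSup_upper) (use assms mnorm_set_bdd[OF assms(1,2)] in auto)

lemma mnorm_comp_le:
  assumes "fb V N j T C" "\<And>h. h \<in> V \<Longrightarrow> 0 \<le> N h" "(\<lambda>_. 0) \<in> W" "N' (\<lambda>_. 0) \<le> 1"
    and "\<And>h. h \<in> W \<Longrightarrow> N' h \<le> 1 \<Longrightarrow> P h \<in> V \<and> N (P h) \<le> 1"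
  shows "mnorm W N' j (\<lambda>hs. T (map P hs)) \<le> mnorm V N j T"
proof (rule mnorm_le[where V=W and N=N', OF assms(3,4)])
  fix hs assume H: "length hs = j" "set hs \<subseteq> W" "\<forall>h\<in>set hs. N' h \<le> 1"
  show "\<bar>T (map P hs)\<bar> \<le> mnorm V N j T"
    by (rule mnorm_upper[OF assms(1,2)]) (use H assms(5) in auto)
qed




lemma mvt_bound:
  fixes \<phi> \<phi>' :: "real \<Rightarrow> real"
  assumes "\<And>t. 0 \<le> t \<Longrightarrow> t \<le> 1 \<Longrightarrow> (\<phi> has_real_derivative \<phi>' t) (at t)"
    and "\<And>t. 0 \<le> t \<Longrightarrow> t \<le> 1 \<Longrightarrow> \<bar>\<phi>' t\<bar> \<le> B"
  shows "\<bar>\<phi> 1 - \<phi> 0\<bar> \<le> B"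
proof -
  obtain z where z: "0 < z" "z < 1" "\<phi> 1 - \<phi> 0 = (1 - 0) * \<phi>' z"
    using MVT2[of 0 1 \<phi> \<phi>'] assms(1) by auto
  then show ?thesis using assms(2)[of z] by simp
qed

lemma le_powr_small:
  fixes x \<alpha> :: real
  assumes "0 \<le> x" "x \<le> 1" "0 < \<alpha>" "\<alpha> \<le> 1"
  shows "x \<le> x powr \<alpha>"
proof (cases "x = 0")
  case True then show ?thesis by simp
next
  case False
  then have "x powr 1 \<le> x powr \<alpha>" using assms by (intro powr_mono') auto
  then show ?thesis using False assms by simp
qed

lemma powr_le_1_plus:
  fixes a \<alpha> :: real
  assumes "0 \<le> a" "0 < \<alpha>" "\<alpha> \<le> 1"
  shows "a powr \<alpha> \<le> 1 + a"
proof (cases "a \<le> 1")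
  case True
  then have "a powr \<alpha> \<le> 1" using assms by (intro powr_le1) auto
  then show ?thesis using assms by simp
next
  case False
  then have "a powr \<alpha> \<le> a powr 1" using assms by (intro powr_mono) auto
  then show ?thesis using False by simp
qed

locale nspace =
  fixes V :: "('i \<Rightarrow> real) set" and N :: "('i \<Rightarrow> real) \<Rightarrow> real"
  assumes zero_in: "(\<lambda>_. 0) \<in> V"
    and add_in: "x \<in> V \<Longrightarrow> y \<in> V \<Longrightarrow> vadd x y \<in> V"
    and scale_in: "x \<in> V \<Longrightarrow> vscale c x \<in> V"
    and N_nonneg: "x \<in> V \<Longrightarrow> 0 \<le> N x"
    and N_scale: "x \<in> V \<Longrightarrow> N (vscale c x) = \<bar>c\<bar> * N x"
    and N_quasi: "x \<in> V \<Longrightarrow> y \<in> V \<Longrightarrow> N (vadd x y) \<le> 4 * (N x + N y)"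
begin

lemma N_zero: "N (\<lambda>_. 0) = 0"
proof -
  have "vscale 0 (\<lambda>_::'i. 0) = (\<lambda>_::'i. 0::real)" by (simp add: fun_eq_iff)
  moreover have "N (vscale 0 (\<lambda>_::'i. 0)) = 0" using N_scale[OF zero_in, of 0] by simp
  ultimately show ?thesis by metis
qed

lemma diff_in: "x \<in> V \<Longrightarrow> y \<in> V \<Longrightarrow> vdiff x y \<in> V"
proof -
  assume "x \<in> V" "y \<in> V"
  have "vdiff x y = vadd x (vscale (-1) y)" by (simp add: fun_eq_iff)
  then show ?thesis using add_in scale_in \<open>x \<in> V\<close> \<open>y \<in> V\<close> by metis
qed

lemma N_sym: "x \<in> V \<Longrightarrow> y \<in> V \<Longrightarrow> N (vdiff x y) = N (vdiff y x)"
proof -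
  assume "x \<in> V" "y \<in> V"
  have "vdiff x y = vscale (-1) (vdiff y x)" by (simp add: fun_eq_iff)
  then show ?thesis using N_scale[OF diff_in[OF \<open>y \<in> V\<close> \<open>x \<in> V\<close>], of "-1"] by simp
qed

lemma ml_scale_map:
  assumes "multilinear_on V j T"
  shows "set as \<subseteq> V \<Longrightarrow> set hs \<subseteq> V \<Longrightarrow> length as + length hs = j \<Longrightarrow>
    T (as @ map (\<lambda>h. vscale (f h) h) hs) = prod_list (map f hs) * T (as @ hs)"
proof (induction hs arbitrary: as)
  case Nil then show ?case by simp
next
  case (Cons h hs)
  have hV: "h \<in> V" "set hs \<subseteq> V" using Cons.prems by auto
  have "T (as @ map (\<lambda>h. vscale (f h) h) (h # hs)) = T ((as @ [vscale (f h) h]) @ map (\<lambda>h. vscale (f h) h) hs)"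
    by simp
  also have "\<dots> = prod_list (map f hs) * T ((as @ [vscale (f h) h]) @ hs)"
    using Cons.prems hV scale_in by (intro Cons.IH) auto
  also have "T ((as @ [vscale (f h) h]) @ hs) = T (as @ vscale (f h) h # hs)" by simp
  also have "\<dots> = f h * T (as @ h # hs)"
    using Cons.prems hV by (intro ml_homog[OF assms]) auto
  finally show ?case by simp
qed

lemma mnorm_pointwise:
  assumes "bounded_multilinear_on V N j T" "length hs = j" "set hs \<subseteq> V"
  shows "\<bar>T hs\<bar> \<le> mnorm V N j T * prod_list (map N hs)"
proof -
  obtain C where C: "fb V N j T C" and ml: "multilinear_on V j T" using assms(1) unfolding bml_iff by blast
  show ?thesis
  proof (cases "\<exists>h\<in>set hs. N h = 0")
    case True
    then have P: "prod_list (map N hs) = 0" by (simp add: prod_list_zero_iff) (metis image_eqI)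
    have "\<bar>T hs\<bar> \<le> C * prod_list (map N hs)" using C assms unfolding fb_def by auto
    then show ?thesis using P by simp
  next
    case False
    then have pos: "\<And>h. h \<in> set hs \<Longrightarrow> 0 < N h" using assms(3) N_nonneg
      by (metis less_eq_real_def subsetD)
    let ?hs' = "map (\<lambda>h. vscale (1 / N h) h) hs"
    have eq: "T ?hs' = prod_list (map (\<lambda>h. 1 / N h) hs) * T hs"
      using ml_scale_map[OF ml, of "[]" hs] assms by auto
    have Ppos: "0 < prod_list (map N hs)"
    proof -
      have "0 \<le> prod_list (map N hs)" using pos by (intro prod_list_nonneg) (auto intro: less_imp_le)
      moreover have "prod_list (map N hs) \<noteq> 0" using False by (auto simp: prod_list_zero_iff)
      ultimately show ?thesis by simp
    qed
    have "\<bar>T ?hs'\<bar> \<le> mnorm V N j T"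
    proof (rule mnorm_upper[OF C])
      show "\<And>h. h \<in> V \<Longrightarrow> 0 \<le> N h" by (rule N_nonneg)
      show "length ?hs' = j" using assms by simp
      show "set ?hs' \<subseteq> V" using assms scale_in by auto
      show "\<forall>h\<in>set ?hs'. N h \<le> 1"
      proof
        fix g assume "g \<in> set ?hs'"
        then obtain h where h: "h \<in> set hs" "g = vscale (1 / N h) h" by auto
        then have "N g = \<bar>1 / N h\<bar> * N h" using N_scale assms(3) by auto
        also have "\<dots> = 1" using pos[OF h(1)] by simp
        finally show "N g \<le> 1" by simp
      qed
    qed
    then have "\<bar>T hs\<bar> / prod_list (map N hs) \<le> mnorm V N j T"
      using eq Ppos by (simp add: prod_list_inv abs_mult)
    then show ?thesis using Ppos by (simp add: divide_le_eq)
  qed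
qed

lemma fb_of_mnorm:
  assumes "bounded_multilinear_on V N j T" "mnorm V N j T \<le> b"
  shows "fb V N j T b"
  unfolding fb_def
proof (intro allI impI)
  fix hs assume H: "length hs = j \<and> set hs \<subseteq> V"
  have "0 \<le> prod_list (map N hs)" using H N_nonneg by (intro prod_list_nonneg) auto
  then have "mnorm V N j T * prod_list (map N hs) \<le> b * prod_list (map N hs)"
    using assms(2) by (intro mult_right_mono)
  moreover have "\<bar>T hs\<bar> \<le> mnorm V N j T * prod_list (map N hs)"
    using mnorm_pointwise[OF assms(1)] H by auto
  ultimately show "\<bar>T hs\<bar> \<le> b * prod_list (map N hs)" by linarith
qed

lemma dir_deriv:
  assumes bj: "\<And>y. y \<in> V \<Longrightarrow> bounded_multilinear_on V N j (E j y)"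
    and bs: "\<And>y. y \<in> V \<Longrightarrow> bounded_multilinear_on V N (Suc j) (E (Suc j) y)"
    and d: "\<And>y. y \<in> V \<Longrightarrow> has_mderiv_at V N j (E j) (E (Suc j) y) y"
    and yh: "y \<in> V" "h \<in> V" and hs: "length hs = j" "set hs \<subseteq> V"
  shows "((\<lambda>t. E j (vadd y (vscale t h)) hs) has_real_derivative E (Suc j) (vadd y (vscale t h)) (h # hs)) (at t)"
proof -
  define y' where "y' = vadd y (vscale t h)"
  have y'V: "y' \<in> V" unfolding y'_def using yh add_in scale_in by auto
  define P where "P = prod_list (map N hs)"
  have P0: "0 \<le> P" unfolding P_def using hs N_nonneg by (intro prod_list_nonneg) auto
  have Nh0: "0 \<le> N h" using N_nonneg yh by auto
  let ?f = "\<lambda>t. E j (vadd y (vscale t h)) hs"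
  let ?f' = "E (Suc j) y' (h # hs)"
  have "(\<lambda>x. (?f (t + x) - ?f t) / x) \<midarrow>0\<rightarrow> ?f'"
    unfolding LIM_eq
  proof (intro allI impI)
    fix r :: real assume r: "0 < r"
    define e where "e = r / (2 * (N h + 1) * (P + 1))"
    have e0: "0 < e" unfolding e_def using r P0 Nh0 by auto
    obtain \<delta> where \<delta>: "\<delta> > 0" and H: "\<And>h'. h' \<in> V \<Longrightarrow> N h' < \<delta> \<Longrightarrow>
        mnorm V N j (\<lambda>hs. E j (vadd y' h') hs - E j y' hs - E (Suc j) y' (h' # hs)) \<le> e * N h'"
      using d[OF y'V] e0 unfolding has_mderiv_at_def by blast
    show "\<exists>s>0. \<forall>x. x \<noteq> 0 \<and> norm (x - 0) < s \<longrightarrow> norm ((?f (t + x) - ?f t) / x - ?f' ) < r"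
    proof (intro exI[of _ "\<delta> / (N h + 1)"] conjI allI impI)
      show "0 < \<delta> / (N h + 1)" using \<delta> Nh0 by auto
      fix x :: real assume x: "x \<noteq> 0 \<and> norm (x - 0) < \<delta> / (N h + 1)"
      define h' where "h' = vscale x h"
      have h'V: "h' \<in> V" unfolding h'_def using yh scale_in by auto
      have Nh': "N h' = \<bar>x\<bar> * N h" unfolding h'_def using N_scale yh by auto
      have "\<bar>x\<bar> * (N h + 1) < \<delta>" using x Nh0 by (simp add: less_divide_eq)
      then have "N h' < \<delta>" unfolding Nh' using Nh0
        by (smt (verit, ccfv_SIG) abs_ge_zero distrib_left mult_nonneg_nonneg)
      from H[OF h'V this] have Hm: "mnorm V N j (\<lambda>hs. E j (vadd y' h') hs - E j y' hs - E (Suc j) y' (h' # hs)) \<le> e * N h'" .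
      have bmlD: "bounded_multilinear_on V N j (\<lambda>hs. E j (vadd y' h') hs - E j y' hs - E (Suc j) y' (h' # hs))"
        using bj bs y'V h'V add_in by (intro bml_diff3 bml_cons) auto
      have "\<bar>E j (vadd y' h') hs - E j y' hs - E (Suc j) y' (h' # hs)\<bar> \<le> mnorm V N j (\<lambda>hs. E j (vadd y' h') hs - E j y' hs - E (Suc j) y' (h' # hs)) * P"
        unfolding P_def using mnorm_pointwise[OF bmlD hs] by simp
      also have "\<dots> \<le> e * N h' * P" using Hm P0 by (rule mult_right_mono)
      finally have B1: "\<bar>E j (vadd y' h') hs - E j y' hs - E (Suc j) y' (h' # hs)\<bar> \<le> e * (\<bar>x\<bar> * N h) * P"
        unfolding Nh' .
      have eq1: "vadd y' h' = vadd y (vscale (t + x) h)" unfolding y'_def h'_def by (simp add: fun_eq_iff algebra_simps)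
      have eq2: "E (Suc j) y' (h' # hs) = x * ?f'"
        unfolding h'_def using ml_homog[of V "Suc j" "E (Suc j) y'" "[]" hs h x] bs[OF y'V] hs yh
        unfolding bml_iff by auto
      have fa: "?f (t + x) = E j (vadd y' h') hs" using eq1 by simp
      have fb: "?f t = E j y' hs" unfolding y'_def ..
      have B2: "\<bar>?f (t + x) - ?f t - x * ?f'\<bar> \<le> \<bar>x\<bar> * (e * N h * P)"
        unfolding fa fb using B1 unfolding eq2 by (simp add: algebra_simps)
      have "(?f (t + x) - ?f t) / x - ?f' = (?f (t + x) - ?f t - x * ?f') / x"
        using x by (simp add: field_simps)
      then have "norm ((?f (t + x) - ?f t) / x - ?f') = \<bar>?f (t + x) - ?f t - x * ?f'\<bar> / \<bar>x\<bar>"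
        by simp
      also have "\<dots> \<le> e * N h * P" using B2 x by (simp add: divide_le_eq mult.commute)
      also have "\<dots> < r"
      proof -
        have "e * N h * P = r * (N h / (N h + 1)) * (P / (P + 1)) / 2"
          unfolding e_def by (simp add: field_simps)
        also have "\<dots> \<le> r * 1 * 1 / 2"
          using r Nh0 P0 by (intro divide_right_mono mult_mono) auto
        finally show ?thesis using r by simp
      qed
      finally show "norm ((?f (t + x) - ?f t) / x - ?f') < r" .
    qed
  qed
  then show ?thesis unfolding DERIV_def y'_def by (simp add: add.commute)
qed

end




locale smoothdata = nspace V N for V :: "('i \<Rightarrow> real) set" and N +
  fixes k :: nat and \<alpha> M :: real and E :: "nat \<Rightarrow> ('i \<Rightarrow> real) \<Rightarrow> ('i \<Rightarrow> real) list \<Rightarrow> real"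
  assumes alpha_pos: "0 < \<alpha>" and alpha_le1: "\<alpha> \<le> 1" and M_nonneg: "0 \<le> M"
    and bml: "j \<le> k \<Longrightarrow> y \<in> V \<Longrightarrow> bounded_multilinear_on V N j (E j y)"
    and der: "j < k \<Longrightarrow> y \<in> V \<Longrightarrow> has_mderiv_at V N j (E j) (E (Suc j) y) y"
    and hol: "y \<in> V \<Longrightarrow> z \<in> V \<Longrightarrow> mnorm V N k (\<lambda>hs. E k y hs - E k z hs) \<le> M * N (vdiff y z) powr \<alpha>"
begin

definition Gam :: "real \<Rightarrow> real \<Rightarrow> real" where "Gam b a = (b + M) * (1 + a) ^ (k + 1)"
definition Kc :: "real \<Rightarrow> real" where "Kc b = M + Gam b 1"

lemma Gam_nonneg: "0 \<le> b \<Longrightarrow> 0 \<le> a \<Longrightarrow> 0 \<le> Gam b a"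
  unfolding Gam_def using M_nonneg by simp

lemma Kc_nonneg: "0 \<le> b \<Longrightarrow> 0 \<le> Kc b"
  unfolding Kc_def using M_nonneg Gam_nonneg[of b 1] by simp

lemma ray_deriv:
  assumes "j < k" "y \<in> V" "u \<in> V" "length hs = j" "set hs \<subseteq> V"
  shows "((\<lambda>t. E j (vadd y (vscale t u)) hs) has_real_derivative E (Suc j) (vadd y (vscale t u)) (u # hs)) (at t)"
  by (rule dir_deriv[where E=E]) (use assms bml der in auto)

lemma vadd_scale0: "vadd y (vscale 0 u) = y" by (simp add: fun_eq_iff)
lemma vadd_scale1: "vadd y (vscale 1 u) = vadd y u" by (simp add: fun_eq_iff)
lemma vdiff_vadd: "vdiff (vadd y u) y = u" by (simp add: fun_eq_iff)

lemma hol_pt: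
  assumes "y \<in> V" "u \<in> V" "length hs = k" "set hs \<subseteq> V"
  shows "\<bar>E k (vadd y u) hs - E k y hs\<bar> \<le> M * N u powr \<alpha> * prod_list (map N hs)"
proof -
  have yu: "vadd y u \<in> V" using assms add_in by auto
  have b: "bounded_multilinear_on V N k (\<lambda>hs. E k (vadd y u) hs - E k y hs)"
    using bml yu assms by (intro bml_diff2) auto
  have "fb V N k (\<lambda>hs. E k (vadd y u) hs - E k y hs) (M * N u powr \<alpha>)"
    using fb_of_mnorm[OF b] hol[OF yu assms(1)] by (simp add: vdiff_vadd)
  then show ?thesis using assms unfolding fb_def by auto
qed

lemma ray_bound_aux:
  assumes y: "y \<in> V" and b: "0 \<le> b" and base: "\<And>j. j \<le> k \<Longrightarrow> fb V N j (E j y) b" and a: "0 \<le> a"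
  shows "i \<le> k \<Longrightarrow> u \<in> V \<Longrightarrow> N u \<le> a \<Longrightarrow> fb V N (k - i) (E (k - i) (vadd y u)) ((b + M) * (1 + a) ^ (i + 1))"
proof (induction i arbitrary: u)
  case 0
  show ?case unfolding fb_def
  proof (intro allI impI)
    fix hs assume H: "length hs = k - 0 \<and> set hs \<subseteq> V"
    have P0: "0 \<le> prod_list (map N hs)" using H N_nonneg by (intro prod_list_nonneg) auto
    have h1: "\<bar>E k (vadd y u) hs - E k y hs\<bar> \<le> M * N u powr \<alpha> * prod_list (map N hs)"
      using hol_pt y 0 H by auto
    have h2: "\<bar>E k y hs\<bar> \<le> b * prod_list (map N hs)" using base[of k] H unfolding fb_def by auto
    have "N u powr \<alpha> \<le> a powr \<alpha>" using 0 N_nonneg alpha_pos by (intro powr_mono2) auto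
    also have "\<dots> \<le> 1 + a" using a alpha_pos alpha_le1 by (rule powr_le_1_plus)
    finally have "M * N u powr \<alpha> \<le> M * (1 + a)" using M_nonneg by (intro mult_left_mono)
    then have h3: "M * N u powr \<alpha> * prod_list (map N hs) \<le> M * (1 + a) * prod_list (map N hs)"
      using P0 by (intro mult_right_mono)
    have "b * 1 \<le> b * (1 + a)" using b a by (intro mult_left_mono) auto
    then have h4: "b * prod_list (map N hs) \<le> b * (1 + a) * prod_list (map N hs)"
      using P0 by (intro mult_right_mono) auto
    have "\<bar>E k (vadd y u) hs\<bar> \<le> (b + M) * (1 + a) * prod_list (map N hs)"
      using h1 h2 h3 h4 by (simp add: algebra_simps)
    then show "\<bar>E (k - 0) (vadd y u) hs\<bar> \<le> (b + M) * (1 + a) ^ (0 + 1) * prod_list (map N hs)" by simp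
  qed
next
  case (Suc i)
  define j where "j = k - Suc i"
  have jk: "j < k" "Suc j = k - i" unfolding j_def using Suc.prems by auto
  define B where "B = (b + M) * (1 + a) ^ (i + 1)"
  have B0: "0 \<le> B" unfolding B_def using b a M_nonneg by simp
  show ?case unfolding j_def[symmetric] fb_def
  proof (intro allI impI)
    fix hs assume H: "length hs = j \<and> set hs \<subseteq> V"
    have P0: "0 \<le> prod_list (map N hs)" using H N_nonneg by (intro prod_list_nonneg) auto
    have Nu0: "0 \<le> N u" using N_nonneg Suc.prems by auto
    let ?\<phi> = "\<lambda>t. E j (vadd y (vscale t u)) hs"
    have "\<bar>?\<phi> 1 - ?\<phi> 0\<bar> \<le> B * a * prod_list (map N hs)"
    proof (rule mvt_bound)
      fix t :: real assume t: "0 \<le> t" "t \<le> 1"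
      show "(?\<phi> has_real_derivative E (Suc j) (vadd y (vscale t u)) (u # hs)) (at t)"
        using ray_deriv[OF jk(1) y] Suc.prems H by auto
      have tu: "vscale t u \<in> V" "N (vscale t u) \<le> a"
      proof -
        show "vscale t u \<in> V" using scale_in Suc.prems by auto
        have "N (vscale t u) = t * N u" using N_scale Suc.prems t by auto
        also have "\<dots> \<le> 1 * N u" using t Nu0 by (intro mult_right_mono) auto
        finally show "N (vscale t u) \<le> a" using Suc.prems by simp
      qed
      have "fb V N (k - i) (E (k - i) (vadd y (vscale t u))) ((b + M) * (1 + a) ^ (i + 1))"
        by (rule Suc.IH[OF _ tu]) (use Suc.prems in simp)
      then have "fb V N (Suc j) (E (Suc j) (vadd y (vscale t u))) B"
        unfolding B_def jk(2) .
      then have "\<bar>E (Suc j) (vadd y (vscale t u)) (u # hs)\<bar> \<le> B * prod_list (map N (u # hs))"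
        unfolding fb_def using H Suc.prems by (elim allE[of _ "u # hs"]) auto
      also have "\<dots> = B * N u * prod_list (map N hs)" by simp
      also have "\<dots> \<le> B * a * prod_list (map N hs)"
        using B0 P0 Suc.prems by (intro mult_right_mono mult_left_mono) auto
      finally show "\<bar>E (Suc j) (vadd y (vscale t u)) (u # hs)\<bar> \<le> B * a * prod_list (map N hs)" .
    qed
    then have h1: "\<bar>E j (vadd y u) hs - E j y hs\<bar> \<le> B * a * prod_list (map N hs)"
      by (simp add: vadd_scale0 vadd_scale1)
    have h2: "\<bar>E j y hs\<bar> \<le> b * prod_list (map N hs)" using base[of j] jk H unfolding fb_def by auto
    have bB: "b \<le> B"
    proof -
      have "1 \<le> (1 + a) ^ (i + 1)" using a by (intro one_le_power) simp
      then have "b * 1 \<le> (b + M) * (1 + a) ^ (i + 1)" using b M_nonneg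
        by (intro mult_mono) auto
      then show ?thesis unfolding B_def by simp
    qed
    have "\<bar>E j (vadd y u) hs\<bar> \<le> (b + B * a) * prod_list (map N hs)"
      using h1 h2 by (simp add: algebra_simps)
    also have "\<dots> \<le> (B + B * a) * prod_list (map N hs)"
      using bB P0 by (intro mult_right_mono) auto
    also have "B + B * a = (b + M) * (1 + a) ^ (Suc i + 1)" unfolding B_def by (simp add: algebra_simps)
    finally show "\<bar>E j (vadd y u) hs\<bar> \<le> (b + M) * (1 + a) ^ (Suc i + 1) * prod_list (map N hs)" .
  qed
qed

lemma ray_bound:
  assumes y: "y \<in> V" and b: "0 \<le> b" and base: "\<And>j. j \<le> k \<Longrightarrow> fb V N j (E j y) b" and a: "0 \<le> a"
    and u: "u \<in> V" "N u \<le> a" and j: "j \<le> k"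
  shows "fb V N j (E j (vadd y u)) (Gam b a)"
proof -
  have "fb V N (k - (k - j)) (E (k - (k - j)) (vadd y u)) ((b + M) * (1 + a) ^ ((k - j) + 1))"
    using ray_bound_aux[OF y b base a, of "k - j" u] u by auto
  then have "fb V N j (E j (vadd y u)) ((b + M) * (1 + a) ^ ((k - j) + 1))" using j by simp
  moreover have "(b + M) * (1 + a) ^ ((k - j) + 1) \<le> Gam b a"
    unfolding Gam_def using b M_nonneg a by (intro mult_left_mono power_increasing) auto
  ultimately show ?thesis using N_nonneg by (rule fb_mono)
qed

lemma cont:
  assumes y: "y \<in> V" and b: "0 \<le> b" and base: "\<And>j. j \<le> k \<Longrightarrow> fb V N j (E j y) b"
    and w: "w \<in> V" "N w \<le> 1" and j: "j \<le> k"
  shows "fb V N j (\<lambda>g. E j (vadd y w) g - E j y g) (Kc b * N w powr \<alpha>)"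
  unfolding fb_def
proof (intro allI impI)
  fix g assume H: "length g = j \<and> set g \<subseteq> V"
  have P0: "0 \<le> prod_list (map N g)" using H N_nonneg by (intro prod_list_nonneg) auto
  have Nw0: "0 \<le> N w" using N_nonneg w by auto
  have pw0: "0 \<le> N w powr \<alpha>" by simp
  show "\<bar>E j (vadd y w) g - E j y g\<bar> \<le> Kc b * N w powr \<alpha> * prod_list (map N g)"
  proof (cases "j = k")
    case True
    then have "\<bar>E j (vadd y w) g - E j y g\<bar> \<le> M * N w powr \<alpha> * prod_list (map N g)"
      using hol_pt[OF y w(1)] H by auto
    also have "\<dots> \<le> Kc b * N w powr \<alpha> * prod_list (map N g)"
      unfolding Kc_def using Gam_nonneg[OF b, of 1] pw0 P0
      by (intro mult_right_mono) auto
    finally show ?thesis .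
  next
    case False
    then have jk: "j < k" using j by auto
    let ?\<phi> = "\<lambda>t. E j (vadd y (vscale t w)) g"
    have "\<bar>?\<phi> 1 - ?\<phi> 0\<bar> \<le> Gam b 1 * N w * prod_list (map N g)"
    proof (rule mvt_bound)
      fix t :: real assume t: "0 \<le> t" "t \<le> 1"
      show "(?\<phi> has_real_derivative E (Suc j) (vadd y (vscale t w)) (w # g)) (at t)"
        using ray_deriv[OF jk y w(1)] H by auto
      have tw: "vscale t w \<in> V" "N (vscale t w) \<le> 1"
      proof -
        show "vscale t w \<in> V" using scale_in w by auto
        have "N (vscale t w) = t * N w" using N_scale w t by auto
        also have "\<dots> \<le> 1 * 1" using t Nw0 w by (intro mult_mono) auto
        finally show "N (vscale t w) \<le> 1" by simp
      qed
      have "fb V N (Suc j) (E (Suc j) (vadd y (vscale t w))) (Gam b 1)"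
        using ray_bound[OF y b base _ tw] jk by auto
      then have "\<bar>E (Suc j) (vadd y (vscale t w)) (w # g)\<bar> \<le> Gam b 1 * prod_list (map N (w # g))"
        unfolding fb_def using H w by (elim allE[of _ "w # g"]) auto
      then show "\<bar>E (Suc j) (vadd y (vscale t w)) (w # g)\<bar> \<le> Gam b 1 * N w * prod_list (map N g)"
        by (simp add: mult.assoc)
    qed
    then have h1: "\<bar>E j (vadd y w) g - E j y g\<bar> \<le> Gam b 1 * N w * prod_list (map N g)"
      by (simp add: vadd_scale0 vadd_scale1)
    have "N w \<le> N w powr \<alpha>" using Nw0 w alpha_pos alpha_le1 by (intro le_powr_small) auto
    then have "Gam b 1 * N w \<le> Gam b 1 * N w powr \<alpha>"
      using Gam_nonneg[OF b, of 1] by (intro mult_left_mono) auto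
    also have "\<dots> \<le> Kc b * N w powr \<alpha>"
      unfolding Kc_def using M_nonneg pw0 by (intro mult_right_mono) auto
    finally have "Gam b 1 * N w \<le> Kc b * N w powr \<alpha>" .
    then have "Gam b 1 * N w * prod_list (map N g) \<le> Kc b * N w powr \<alpha> * prod_list (map N g)"
      using P0 by (intro mult_right_mono)
    then show ?thesis using h1 by linarith
  qed
qed

lemma remainder:
  assumes jk: "j < k" and y: "y \<in> V" and b: "0 \<le> b" and base: "\<And>j. j \<le> k \<Longrightarrow> fb V N j (E j y) b"
    and h: "h \<in> V" "N h \<le> 1" and hs: "length hs = j" "set hs \<subseteq> V"
  shows "\<bar>E j (vadd y h) hs - E j y hs - E (Suc j) y (h # hs)\<bar> \<le> Kc b * N h powr \<alpha> * N h * prod_list (map N hs)"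
proof -
  have P0: "0 \<le> prod_list (map N hs)" using hs N_nonneg by (intro prod_list_nonneg) auto
  have Nh0: "0 \<le> N h" using N_nonneg h by auto
  let ?\<phi> = "\<lambda>t. E j (vadd y (vscale t h)) hs - t * E (Suc j) y (h # hs)"
  have "\<bar>?\<phi> 1 - ?\<phi> 0\<bar> \<le> Kc b * N h powr \<alpha> * N h * prod_list (map N hs)"
  proof (rule mvt_bound)
    fix t :: real assume t: "0 \<le> t" "t \<le> 1"
    show "(?\<phi> has_real_derivative E (Suc j) (vadd y (vscale t h)) (h # hs) - 1 * E (Suc j) y (h # hs)) (at t)"
      by (intro DERIV_diff ray_deriv[OF jk y h(1) hs] DERIV_cmult_right[OF DERIV_ident])
    have th: "vscale t h \<in> V" "N (vscale t h) \<le> 1" "N (vscale t h) \<le> N h"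
    proof -
      show "vscale t h \<in> V" using scale_in h by auto
      have "N (vscale t h) = t * N h" using N_scale h t by auto
      also have "\<dots> \<le> 1 * N h" using t Nh0 by (intro mult_right_mono) auto
      finally show "N (vscale t h) \<le> N h" by simp
      then show "N (vscale t h) \<le> 1" using h by simp
    qed
    have "fb V N (Suc j) (\<lambda>g. E (Suc j) (vadd y (vscale t h)) g - E (Suc j) y g) (Kc b * N (vscale t h) powr \<alpha>)"
      using cont[OF y b base th(1,2)] jk by auto
    then have "\<bar>E (Suc j) (vadd y (vscale t h)) (h # hs) - E (Suc j) y (h # hs)\<bar> \<le> Kc b * N (vscale t h) powr \<alpha> * prod_list (map N (h # hs))"
      unfolding fb_def using hs h by (elim allE[of _ "h # hs"]) auto
    also have "\<dots> = Kc b * N (vscale t h) powr \<alpha> * (N h * prod_list (map N hs))" by simp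
    also have "\<dots> \<le> Kc b * N h powr \<alpha> * (N h * prod_list (map N hs))"
      using th N_nonneg Kc_nonneg[OF b] Nh0 P0 alpha_pos
      by (intro mult_right_mono mult_left_mono powr_mono2) auto
    finally show "\<bar>E (Suc j) (vadd y (vscale t h)) (h # hs) - 1 * E (Suc j) y (h # hs)\<bar> \<le> Kc b * N h powr \<alpha> * N h * prod_list (map N hs)"
      by (simp add: mult.assoc)
  qed
  then show ?thesis by (simp add: vadd_scale0 vadd_scale1 algebra_simps)
qed

end

context nspace begin

lemma ml_telescope:
  assumes ml: "multilinear_on V j T" and C: "fb V N j T C" and C0: "0 \<le> C" and B1: "1 \<le> B" and eta: "0 \<le> \<eta>"
  shows "set as \<subseteq> V \<Longrightarrow> set hs \<subseteq> V \<Longrightarrow> set hs' \<subseteq> V \<Longrightarrow> length hs' = length hs \<Longrightarrow> length as + length hs = j \<Longrightarrow>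
    (\<forall>i < length hs. N (hs ! i) \<le> B \<and> N (hs' ! i) \<le> B \<and> N (vdiff (hs ! i) (hs' ! i)) \<le> \<eta>) \<Longrightarrow>
    \<bar>T (as @ hs) - T (as @ hs')\<bar> \<le> real (length hs) * C * prod_list (map N as) * B ^ length hs * \<eta>"
proof (induction hs arbitrary: as hs')
  case Nil then show ?case by simp
next
  case (Cons h hs)
  obtain h' hs'' where hs': "hs' = h' # hs''" using Cons.prems(4) by (cases hs') auto
  have hV: "h \<in> V" "h' \<in> V" "set hs \<subseteq> V" "set hs'' \<subseteq> V" using Cons.prems hs' by auto
  have "0 < length (h # hs)" by simp
  with Cons.prems(6) have b0: "N ((h # hs) ! 0) \<le> B \<and> N (hs' ! 0) \<le> B \<and> N (vdiff ((h # hs) ! 0) (hs' ! 0)) \<le> \<eta>" by blast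
  then have bnd: "N h \<le> B" "N h' \<le> B" "N (vdiff h h') \<le> \<eta>" unfolding hs' by (simp_all only: nth_Cons_0)
  have bnd2: "\<forall>i < length hs. N (hs ! i) \<le> B \<and> N (hs'' ! i) \<le> B \<and> N (vdiff (hs ! i) (hs'' ! i)) \<le> \<eta>"
  proof (intro allI impI)
    fix i assume "i < length hs"
    then have "Suc i < length (h # hs)" by simp
    with Cons.prems(6) have "N ((h # hs) ! Suc i) \<le> B \<and> N (hs' ! Suc i) \<le> B \<and> N (vdiff ((h # hs) ! Suc i) (hs' ! Suc i)) \<le> \<eta>"
      by blast
    then show "N (hs ! i) \<le> B \<and> N (hs'' ! i) \<le> B \<and> N (vdiff (hs ! i) (hs'' ! i)) \<le> \<eta>"
      unfolding hs' by (simp only: nth_Cons_Suc)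
  qed
  have PA: "0 \<le> prod_list (map N as)" using Cons.prems N_nonneg by (intro prod_list_nonneg) auto
  have Nh0: "0 \<le> N h" using N_nonneg hV by auto
  have IH: "\<bar>T ((as @ [h]) @ hs) - T ((as @ [h]) @ hs'')\<bar> \<le> real (length hs) * C * prod_list (map N (as @ [h])) * B ^ length hs * \<eta>"
    using Cons.prems hV hs' bnd2 by (intro Cons.IH) auto
  have "real (length hs) * C * prod_list (map N (as @ [h])) * B ^ length hs * \<eta>
      = real (length hs) * C * prod_list (map N as) * N h * B ^ length hs * \<eta>" by simp
  also have "\<dots> \<le> real (length hs) * C * prod_list (map N as) * B * B ^ length hs * \<eta>"
    using bnd C0 PA eta B1 Nh0 by (intro mult_right_mono mult_left_mono) auto
  finally have T1: "\<bar>T (as @ h # hs) - T (as @ h # hs'')\<bar> \<le> real (length hs) * C * prod_list (map N as) * B ^ Suc (length hs) * \<eta>"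
    using IH by (simp add: mult.assoc mult.left_commute)
  have eqd: "T (as @ vdiff h h' # hs'') = T (as @ h # hs'') - T (as @ h' # hs'')"
    using Cons.prems hV hs' by (intro ml_diff[OF ml]) auto
  have lhs'': "length hs'' = length hs" using Cons.prems(4) hs' by simp
  have P2: "prod_list (map N hs'') \<le> B ^ length hs''"
  proof (rule prod_list_le_pow)
    fix g assume g: "g \<in> set hs''"
    then obtain i where i: "i < length hs''" "g = hs'' ! i" by (auto simp: in_set_conv_nth)
    have "N g \<le> B" using bnd2 i lhs'' by auto
    moreover have "0 \<le> N g" using g hV N_nonneg by auto
    ultimately show "0 \<le> N g \<and> N g \<le> B" by simp
  qed
  have P20: "0 \<le> prod_list (map N hs'')" using hV N_nonneg by (intro prod_list_nonneg) auto
  have "\<bar>T (as @ vdiff h h' # hs'')\<bar> \<le> C * prod_list (map N (as @ vdiff h h' # hs''))"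
    using C Cons.prems hV hs' diff_in[OF hV(1,2)] lhs'' unfolding fb_def by (elim allE[of _ "as @ vdiff h h' # hs''"]) auto
  also have "\<dots> = C * prod_list (map N as) * N (vdiff h h') * prod_list (map N hs'')" by (simp add: mult.assoc)
  also have "\<dots> \<le> C * prod_list (map N as) * \<eta> * B ^ length hs"
    using C0 PA bnd P2 P20 hs' lhs'' eta N_nonneg diff_in hV by (intro mult_mono mult_left_mono) (auto intro: mult_nonneg_nonneg)
  also have "\<dots> \<le> C * prod_list (map N as) * \<eta> * B ^ Suc (length hs)"
    using C0 PA eta B1 by (intro mult_left_mono power_increasing) auto
  finally have T2: "\<bar>T (as @ h # hs'') - T (as @ h' # hs'')\<bar> \<le> C * prod_list (map N as) * B ^ Suc (length hs) * \<eta>"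
    using eqd by (simp add: algebra_simps)
  have "\<bar>T (as @ h # hs) - T (as @ hs')\<bar> \<le> \<bar>T (as @ h # hs) - T (as @ h # hs'')\<bar> + \<bar>T (as @ h # hs'') - T (as @ h' # hs'')\<bar>"
    unfolding hs' by simp
  also have "\<dots> \<le> real (length hs) * C * prod_list (map N as) * B ^ Suc (length hs) * \<eta> + C * prod_list (map N as) * B ^ Suc (length hs) * \<eta>"
    using T1 T2 by simp
  also have "\<dots> = real (length (h # hs)) * C * prod_list (map N as) * B ^ length (h # hs) * \<eta>"
    by (simp add: algebra_simps)
  finally show ?case .
qed

end




lemma diag_conv:
  fixes f :: "nat \<Rightarrow> nat \<Rightarrow> real"
  assumes bdd: "\<And>i. \<exists>B. \<forall>m. \<bar>f i m\<bar> \<le> B"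
  shows "\<exists>s. strict_mono s \<and> (\<forall>i. convergent (\<lambda>m. f i (s m)))"
proof -
  let ?P = "\<lambda>n. \<lambda>s. convergent (\<lambda>k. f n (s k))"
  interpret nat: subseqs ?P
  proof (unfold convergent_def, unfold subseqs_def, auto)
    fix n :: nat and s :: "nat \<Rightarrow> nat" assume s: "strict_mono s"
    obtain B where B: "\<forall>m. \<bar>f n m\<bar> \<le> B" using bdd by blast
    have "bounded {-B..B}" using bounded_closed_interval by auto
    moreover have "\<And>k. f n (s k) \<in> {-B..B}" using B by (simp add: abs_le_iff minus_le_iff)
    ultimately have "\<exists>l s'. strict_mono s' \<and> ((\<lambda>k. f n (s k)) \<circ> s') \<longlonglongrightarrow> l"
      using compact_Icc compact_imp_seq_compact seq_compactE by metis
    thus "\<exists>s'. strict_mono (s'::nat\<Rightarrow>nat) \<and> (\<exists>l. (\<lambda>k. f n (s (s' k))) \<longlonglongrightarrow> l)"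
      by (auto simp: comp_def)
  qed
  define d where "d = nat.diagseq"
  have subseq: "strict_mono d"
    unfolding d_def using nat.subseq_diagseq by auto
  have cnv: "?P n d" for n
  proof -
    have Pn_seqseq: "?P n (nat.seqseq (Suc n))"
      by (rule nat.seqseq_holds)
    have 1: "(\<lambda>k. f n ((nat.seqseq (Suc n) \<circ> (\<lambda>k. nat.fold_reduce (Suc n) k
      (Suc n + k))) k)) = (\<lambda>k. f n (nat.seqseq (Suc n) k)) \<circ>
      (\<lambda>k. nat.fold_reduce (Suc n) k (Suc n + k))"
      by auto
    have 2: "?P n (d \<circ> ((+) (Suc n)))"
      unfolding d_def nat.diagseq_seqseq 1
      by (intro convergent_subseq_convergent Pn_seqseq nat.subseq_diagonal_rest)
    then obtain L where 3: "(\<lambda>na. f n (d (na + Suc n))) \<longlonglongrightarrow> L"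
      by (auto simp: add.commute dest: convergentD)
    then have "(\<lambda>k. f n (d k)) \<longlonglongrightarrow> L"
      by (rule LIMSEQ_offset)
    then show ?thesis
      by (auto simp: convergent_def)
  qed
  show ?thesis using subseq cnv by blast
qed

lemma small_eta:
  fixes A \<alpha> e :: real
  assumes "0 \<le> A" "0 < \<alpha>" "0 < e"
  shows "\<exists>\<eta>>0. \<eta> \<le> 1 \<and> A * \<eta> powr \<alpha> < e"
proof -
  define \<eta> where "\<eta> = min 1 ((e / (A + 1)) powr (1 / \<alpha>))"
  have pos: "0 < e / (A + 1)" using assms by simp
  have ne: "A + 1 \<noteq> 0" "e \<noteq> 0" using assms by auto
  have eta0: "\<eta> > 0" unfolding \<eta>_def using pos ne by simp
  have le: "\<eta> \<le> (e / (A + 1)) powr (1 / \<alpha>)" unfolding \<eta>_def by simp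
  have "\<eta> powr \<alpha> \<le> ((e / (A + 1)) powr (1 / \<alpha>)) powr \<alpha>"
    using assms eta0 le by (intro powr_mono2) auto
  have "((e / (A + 1)) powr (1 / \<alpha>)) powr \<alpha> = (e / (A + 1)) powr 1" using assms by (simp add: powr_powr)
  also have "\<dots> = e / (A + 1)" by (rule powr_one) (use pos in linarith)
  finally have h: "\<eta> powr \<alpha> \<le> e / (A + 1)" using \<open>\<eta> powr \<alpha> \<le> ((e / (A + 1)) powr (1 / \<alpha>)) powr \<alpha>\<close> by simp
  have "A * \<eta> powr \<alpha> \<le> A * (e / (A + 1))" using h assms by (intro mult_left_mono) auto
  also have "\<dots> < e" using assms by (simp add: field_simps)
  finally have "A * \<eta> powr \<alpha> < e" .
  moreover have "\<eta> \<le> 1" unfolding \<eta>_def by simp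
  ultimately show ?thesis using eta0 by blast
qed

lemma core:
  fixes V :: "('i \<Rightarrow> real) set" and E :: "nat \<Rightarrow> nat \<Rightarrow> ('i \<Rightarrow> real) \<Rightarrow> ('i \<Rightarrow> real) list \<Rightarrow> real"
  assumes ns: "nspace V N"
    and Qc: "countable Q" and QV: "Q \<subseteq> V" and Qd: "\<And>y e. y \<in> V \<Longrightarrow> 0 < e \<Longrightarrow> \<exists>y'\<in>Q. N (vdiff y y') < e"
    and sd: "\<And>n. smoothdata V N k \<alpha> M (E n)"
    and c0: "0 \<le> c" and cb: "\<And>n j. j \<le> k \<Longrightarrow> fb V N j (E n j (\<lambda>_. 0)) c"
  shows "\<exists>s D. strict_mono s \<and>
     (\<forall>j\<le>k. \<forall>y\<in>V. \<forall>hs. length hs = j \<and> set hs \<subseteq> V \<longrightarrow> (\<lambda>m. E (s m) j y hs) \<longlonglongrightarrow> D j y hs) \<and>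
     (\<forall>j\<le>k. \<forall>y\<in>V. bounded_multilinear_on V N j (D j y)) \<and>
     (\<forall>j<k. \<forall>y\<in>V. has_mderiv_at V N j (D j) (D (Suc j) y) y) \<and>
     (\<forall>y\<in>V. \<forall>z\<in>V. mnorm V N k (\<lambda>hs. D k y hs - D k z hs) \<le> M * N (vdiff y z) powr \<alpha>)"
proof -
  interpret nspace V N by (rule ns)
  have a0: "0 < \<alpha>" and a1: "\<alpha> \<le> 1" and M0: "0 \<le> M"
    using smoothdata.alpha_pos[OF sd] smoothdata.alpha_le1[OF sd] smoothdata.M_nonneg[OF sd] by auto
  define Gy where "Gy y = (c + M) * (1 + N y) ^ (k + 1)" for y
  define Ky where "Ky y = M + (Gy y + M) * (1 + 1) ^ (k + 1)" for y
  define Cy where "Cy y = (Gy y + M) * (1 + 1) ^ (k + 1)" for y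
  have Gy0: "0 \<le> Gy y" if "y \<in> V" for y
    unfolding Gy_def using c0 M0 N_nonneg[OF that] by simp
  have Cy0: "0 \<le> Cy y" if "y \<in> V" for y
    unfolding Cy_def using Gy0[OF that] M0 by simp
  have Ky0: "0 \<le> Ky y" if "y \<in> V" for y
    unfolding Ky_def using Gy0[OF that] M0 by simp
  have ubound: "fb V N j (E n j y) (Gy y)" if "j \<le> k" "y \<in> V" for n j y
  proof -
    interpret S: smoothdata V N k \<alpha> M "E n" by (rule sd)
    have "fb V N j (E n j (vadd (\<lambda>_. 0) y)) (S.Gam c (N y))"
      by (rule S.ray_bound[OF zero_in c0 cb N_nonneg[OF that(2)] that(2) order_refl that(1)])
    moreover have "vadd (\<lambda>_. 0) y = y" by (simp add: fun_eq_iff)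
    ultimately show ?thesis unfolding S.Gam_def Gy_def by simp
  qed
  have ucb: "fb V N j (E n j (vadd y w)) (Cy y)" if "j \<le> k" "y \<in> V" "w \<in> V" "N w \<le> 1" for n j y w
  proof -
    interpret S: smoothdata V N k \<alpha> M "E n" by (rule sd)
    have "fb V N j (E n j (vadd y w)) (S.Gam (Gy y) 1)"
      by (rule S.ray_bound[OF that(2) Gy0[OF that(2)] ubound[OF _ that(2)] _ that(3,4) that(1)]) auto
    then show ?thesis unfolding S.Gam_def Cy_def by simp
  qed
  have ucont: "fb V N j (\<lambda>g. E n j (vadd y w) g - E n j y g) (Ky y * N w powr \<alpha>)"
    if "j \<le> k" "y \<in> V" "w \<in> V" "N w \<le> 1" for n j y w
  proof -
    interpret S: smoothdata V N k \<alpha> M "E n" by (rule sd)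
    have "fb V N j (\<lambda>g. E n j (vadd y w) g - E n j y g) (S.Kc (Gy y) * N w powr \<alpha>)"
      by (rule S.cont[OF that(2) Gy0[OF that(2)] ubound[OF _ that(2)] that(3,4) that(1)])
    then show ?thesis unfolding S.Kc_def S.Gam_def Ky_def by simp
  qed
  have urem: "\<bar>E n j (vadd y h) hs - E n j y hs - E n (Suc j) y (h # hs)\<bar> \<le> Ky y * N h powr \<alpha> * N h * prod_list (map N hs)"
    if "j < k" "y \<in> V" "h \<in> V" "N h \<le> 1" "length hs = j" "set hs \<subseteq> V" for n j y h hs
  proof -
    interpret S: smoothdata V N k \<alpha> M "E n" by (rule sd)
    have "\<bar>E n j (vadd y h) hs - E n j y hs - E n (Suc j) y (h # hs)\<bar> \<le> S.Kc (Gy y) * N h powr \<alpha> * N h * prod_list (map N hs)"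
      by (rule S.remainder[OF that(1,2) Gy0[OF that(2)] ubound[OF _ that(2)] that(3-6)])
    then show ?thesis unfolding S.Kc_def S.Gam_def Ky_def by simp
  qed
  have uhol: "\<bar>E n k y hs - E n k z hs\<bar> \<le> M * N (vdiff y z) powr \<alpha> * prod_list (map N hs)"
    if "y \<in> V" "z \<in> V" "length hs = k" "set hs \<subseteq> V" for n y z hs
  proof -
    interpret S: smoothdata V N k \<alpha> M "E n" by (rule sd)
    have b: "bounded_multilinear_on V N k (\<lambda>hs. E n k y hs - E n k z hs)"
      using S.bml that by (intro bml_diff2) auto
    have "fb V N k (\<lambda>hs. E n k y hs - E n k z hs) (M * N (vdiff y z) powr \<alpha>)"
      using fb_of_mnorm[OF b] S.hol[OF that(1,2)] by simp
    then show ?thesis using that unfolding fb_def by auto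
  qed
  have uml: "multilinear_on V j (E n j y)" if "j \<le> k" "y \<in> V" for n j y
    using smoothdata.bml[OF sd that] unfolding bml_iff by blast
  obtain q0 where q0: "q0 \<in> Q" using Qd[OF zero_in, of 1] by auto
  define I where "I = {(j, y, hs). j \<le> k \<and> y \<in> Q \<and> set hs \<subseteq> Q \<and> length hs = j}"
  have I_ne: "I \<noteq> {}" unfolding I_def using q0 by (intro ex_in_conv[THEN iffD1] exI[of _ "(0, q0, [])"]) auto
  have I_c: "countable I"
  proof (rule countable_subset)
    show "I \<subseteq> {..k} \<times> Q \<times> lists Q" unfolding I_def by auto
    show "countable ({..k} \<times> Q \<times> lists Q)" using Qc by auto
  qed
  define \<iota> where "\<iota> = from_nat_into I"
  define f where "f i m = (case \<iota> i of (j, y, hs) \<Rightarrow> E m j y hs)" for i m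
  have fbdd: "\<exists>B. \<forall>m. \<bar>f i m\<bar> \<le> B" for i
  proof -
    obtain j y hs where jyh: "\<iota> i = (j, y, hs)" by (cases "\<iota> i") auto
    have "\<iota> i \<in> I" unfolding \<iota>_def using I_ne by (rule from_nat_into)
    then have H: "j \<le> k" "y \<in> V" "set hs \<subseteq> V" "length hs = j" using jyh QV unfolding I_def by auto
    have "\<forall>m. \<bar>f i m\<bar> \<le> Gy y * prod_list (map N hs)"
      using ubound[OF H(1,2)] H unfolding f_def jyh fb_def by auto
    then show ?thesis by blast
  qed
  obtain s where s: "strict_mono s" "\<And>i. convergent (\<lambda>m. f i (s m))"
    using diag_conv[of f] fbdd by blast
  have conv_dense: "convergent (\<lambda>m. E (s m) j y hs)" if "(j, y, hs) \<in> I" for j y hs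
  proof -
    have "(j, y, hs) \<in> range \<iota>" unfolding \<iota>_def using that I_ne I_c by simp
    then obtain i where "\<iota> i = (j, y, hs)" by auto
    then show ?thesis using s(2)[of i] unfolding f_def by simp
  qed
  have conv_all: "convergent (\<lambda>m. E (s m) j y hs)"
    if H: "j \<le> k" "y \<in> V" "length hs = j" "set hs \<subseteq> V" for j y hs
  proof (rule Cauchy_convergent_iff[THEN iffD1], rule CauchyI)
    fix e :: real assume e: "0 < e"
    define P where "P = prod_list (map N hs)"
    define B where "B = 4 * (sum_list (map N hs) + 1)"
    define A where "A = Ky y * P + real j * Cy y * B ^ j"
    have P0: "0 \<le> P" unfolding P_def using H N_nonneg by (intro prod_list_nonneg) auto
    have sl0: "0 \<le> sum_list (map N hs)" using H N_nonneg by (intro sum_list_nonneg) auto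
    have B1: "1 \<le> B" unfolding B_def using sl0 by simp
    have A0: "0 \<le> A" unfolding A_def using Ky0[OF H(2)] Cy0[OF H(2)] P0 B1 by simp
    obtain \<eta> where \<eta>: "0 < \<eta>" "\<eta> \<le> 1" "A * \<eta> powr \<alpha> < e / 3"
      using small_eta[OF A0 a0, of "e / 3"] e by auto
    obtain y' where y': "y' \<in> Q" "N (vdiff y y') < \<eta>" using Qd[OF H(2) \<eta>(1)] by blast
    define pick where "pick h = (SOME h'. h' \<in> Q \<and> N (vdiff h h') < \<eta>)" for h
    have pick: "pick h \<in> Q \<and> N (vdiff h (pick h)) < \<eta>" if "h \<in> V" for h
    proof -
      have "\<exists>h'. h' \<in> Q \<and> N (vdiff h h') < \<eta>" using Qd[OF that \<eta>(1)] by blast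
      then show ?thesis unfolding pick_def by (rule someI_ex)
    qed
    define hs' where "hs' = map pick hs"
    have inI: "(j, y', hs') \<in> I" unfolding I_def hs'_def using H y' pick by auto
    have "Cauchy (\<lambda>m. E (s m) j y' hs')" using conv_dense[OF inI] Cauchy_convergent_iff by blast
    then obtain M0 where M0: "\<forall>m\<ge>M0. \<forall>n\<ge>M0. norm (E (s m) j y' hs' - E (s n) j y' hs') < e / 3"
      using CauchyD e by (metis divide_pos_pos zero_less_numeral)
    have approx: "\<bar>E n j y hs - E n j y' hs'\<bar> \<le> A * \<eta> powr \<alpha>" for n
    proof -
      define w where "w = vdiff y' y"
      have y'V: "y' \<in> V" using y' QV by auto
      have wV: "w \<in> V" unfolding w_def using y'V H diff_in by auto
      have Nw: "N w < \<eta>" unfolding w_def using N_sym[OF y'V H(2)] y' by simp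
      have Nw0: "0 \<le> N w" using N_nonneg wV by auto
      have Nw1: "N w \<le> 1" using Nw \<eta> by simp
      have yw: "vadd y w = y'" unfolding w_def by (simp add: fun_eq_iff)
      have "\<bar>E n j (vadd y w) hs - E n j y hs\<bar> \<le> Ky y * N w powr \<alpha> * P"
        using ucont[OF H(1,2) wV Nw1] H unfolding fb_def P_def by auto
      also have "\<dots> \<le> Ky y * \<eta> powr \<alpha> * P"
        using Ky0[OF H(2)] P0 Nw Nw0 a0 by (intro mult_right_mono mult_left_mono powr_mono2) auto
      finally have e1: "\<bar>E n j y' hs - E n j y hs\<bar> \<le> Ky y * \<eta> powr \<alpha> * P" unfolding yw .
      have hs'V: "set hs' \<subseteq> V" unfolding hs'_def using pick H QV by auto
      have bnds: "\<forall>i < length hs. N (hs ! i) \<le> B \<and> N (hs' ! i) \<le> B \<and> N (vdiff (hs ! i) (hs' ! i)) \<le> \<eta>"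
      proof (intro allI impI)
        fix i assume i: "i < length hs"
        define h where "h = hs ! i"
        have hV: "h \<in> V" unfolding h_def using i H by auto
        have h'eq: "hs' ! i = pick h" unfolding hs'_def h_def using i by simp
        have pk: "pick h \<in> Q" "N (vdiff h (pick h)) < \<eta>" using pick[OF hV] by auto
        have pV: "pick h \<in> V" using pk QV by auto
        have Nh_le: "N h \<le> sum_list (map N hs)"
          unfolding h_def using i H N_nonneg
          by (intro member_le_sum_list[of "N (hs ! i)" "map N hs", THEN order_trans]) (auto intro: sum_list_nonneg)
        have eqv: "vadd h (vscale (-1) (vdiff h (pick h))) = pick h" by (simp add: fun_eq_iff)
        have "N (pick h) \<le> 4 * (N h + N (vscale (-1) (vdiff h (pick h))))"
          using N_quasi[OF hV scale_in[OF diff_in[OF hV pV]], of "-1"] unfolding eqv .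
        also have "N (vscale (-1) (vdiff h (pick h))) = N (vdiff h (pick h))"
          using N_scale[OF diff_in[OF hV pV]] by simp
        finally have "N (pick h) \<le> 4 * (N h + N (vdiff h (pick h)))" .
        also have "\<dots> \<le> B" unfolding B_def using Nh_le pk \<eta> by simp
        finally have "N (pick h) \<le> B" .
        moreover have "N h \<le> B" unfolding B_def using Nh_le sl0 N_nonneg[OF hV] by simp
        ultimately show "N (hs ! i) \<le> B \<and> N (hs' ! i) \<le> B \<and> N (vdiff (hs ! i) (hs' ! i)) \<le> \<eta>"
          unfolding h'eq h_def[symmetric] using pk by simp
      qed
      have "\<bar>E n j y' ([] @ hs) - E n j y' ([] @ hs')\<bar> \<le> real (length hs) * Cy y * prod_list (map N []) * B ^ length hs * \<eta>"
      proof (rule ml_telescope)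
        show "multilinear_on V j (E n j y')" using uml[OF H(1) y'V] .
        show "fb V N j (E n j y') (Cy y)" using ucb[OF H(1,2) wV Nw1] unfolding yw .
      qed (use Cy0[OF H(2)] B1 \<eta> H hs'V bnds in \<open>auto simp: hs'_def\<close>)
      then have e2: "\<bar>E n j y' hs - E n j y' hs'\<bar> \<le> real j * Cy y * B ^ j * \<eta>" using H by simp
      have "\<eta> \<le> \<eta> powr \<alpha>" using \<eta> a0 a1 by (intro le_powr_small) auto
      then have "real j * Cy y * B ^ j * \<eta> \<le> real j * Cy y * B ^ j * \<eta> powr \<alpha>"
        using Cy0[OF H(2)] B1 by (intro mult_left_mono) auto
      then have "\<bar>E n j y hs - E n j y' hs'\<bar> \<le> Ky y * \<eta> powr \<alpha> * P + real j * Cy y * B ^ j * \<eta> powr \<alpha>"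
        using e1 e2 by linarith
      also have "\<dots> = A * \<eta> powr \<alpha>" unfolding A_def by (simp add: algebra_simps)
      finally show ?thesis .
    qed
    show "\<exists>M. \<forall>m\<ge>M. \<forall>n\<ge>M. norm (E (s m) j y hs - E (s n) j y hs) < e"
    proof (intro exI[of _ M0] allI impI)
      fix m n assume "M0 \<le> m" "M0 \<le> n"
      then have "\<bar>E (s m) j y' hs' - E (s n) j y' hs'\<bar> < e / 3" using M0 by auto
      moreover have "\<bar>E (s m) j y hs - E (s m) j y' hs'\<bar> < e / 3" using approx[of "s m"] \<eta> by linarith
      moreover have "\<bar>E (s n) j y hs - E (s n) j y' hs'\<bar> < e / 3" using approx[of "s n"] \<eta> by linarith
      ultimately show "norm (E (s m) j y hs - E (s n) j y hs) < e" unfolding real_norm_def abs_less_iff by linarith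
    qed
  qed
  define D where "D j y hs = lim (\<lambda>m. E (s m) j y hs)" for j y hs
  have lim: "(\<lambda>m. E (s m) j y hs) \<longlonglongrightarrow> D j y hs"
    if "j \<le> k" "y \<in> V" "length hs = j" "set hs \<subseteq> V" for j y hs
    unfolding D_def using conv_all[OF that] convergent_LIMSEQ_iff by blast
  have P1: "\<forall>j\<le>k. \<forall>y\<in>V. \<forall>hs. length hs = j \<and> set hs \<subseteq> V \<longrightarrow> (\<lambda>m. E (s m) j y hs) \<longlonglongrightarrow> D j y hs"
    using lim by blast
  have P2: "\<forall>j\<le>k. \<forall>y\<in>V. bounded_multilinear_on V N j (D j y)"
  proof (intro allI impI ballI)
    fix j y assume j: "j \<le> k" and y: "y \<in> V"
    have ml: "multilinear_on V j (D j y)"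
      unfolding multilinear_on_def
    proof (intro allI impI)
      fix as bs x z a b
      assume H: "length as + length bs + 1 = j \<and> set as \<subseteq> V \<and> set bs \<subseteq> V \<and> x \<in> V \<and> z \<in> V"
      define L where "L = as @ vadd (vscale a x) (vscale b z) # bs"
      have LV: "set L \<subseteq> V" "length L = j" unfolding L_def using H add_in scale_in by auto
      have l1: "(\<lambda>m. E (s m) j y L) \<longlonglongrightarrow> D j y L" by (rule lim[OF j y LV(2,1)])
      have eq: "E (s m) j y L = a * E (s m) j y (as @ x # bs) + b * E (s m) j y (as @ z # bs)" for m
        using uml[OF j y, of "s m"] H unfolding multilinear_on_def L_def by blast
      have "(\<lambda>m. a * E (s m) j y (as @ x # bs) + b * E (s m) j y (as @ z # bs)) \<longlonglongrightarrow> a * D j y (as @ x # bs) + b * D j y (as @ z # bs)"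
        using H by (intro tendsto_intros lim[OF j y]) auto
      then have "(\<lambda>m. E (s m) j y L) \<longlonglongrightarrow> a * D j y (as @ x # bs) + b * D j y (as @ z # bs)"
        unfolding eq .
      then show "D j y (as @ vadd (vscale a x) (vscale b z) # bs) = a * D j y (as @ x # bs) + b * D j y (as @ z # bs)"
        using l1 LIMSEQ_unique unfolding L_def by blast
    qed
    have "fb V N j (D j y) (Gy y)"
      unfolding fb_def
    proof (intro allI impI)
      fix hs assume H: "length hs = j \<and> set hs \<subseteq> V"
      have "(\<lambda>m. \<bar>E (s m) j y hs\<bar>) \<longlonglongrightarrow> \<bar>D j y hs\<bar>" using lim[OF j y] H by (intro tendsto_intros) auto
      moreover have "\<forall>m. \<bar>E (s m) j y hs\<bar> \<le> Gy y * prod_list (map N hs)"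
        using ubound[OF j y] H unfolding fb_def by auto
      ultimately show "\<bar>D j y hs\<bar> \<le> Gy y * prod_list (map N hs)"
        by (intro LIMSEQ_le_const2) auto
    qed
    then show "bounded_multilinear_on V N j (D j y)" using ml unfolding bml_iff by blast
  qed
  have P3: "\<forall>j<k. \<forall>y\<in>V. has_mderiv_at V N j (D j) (D (Suc j) y) y"
  proof (intro allI impI ballI)
    fix j y assume j: "j < k" and y: "y \<in> V"
    show "has_mderiv_at V N j (D j) (D (Suc j) y) y"
      unfolding has_mderiv_at_def
    proof (intro allI impI)
      fix \<epsilon> :: real assume \<epsilon>: "0 < \<epsilon>"
      obtain \<delta> where \<delta>: "0 < \<delta>" "\<delta> \<le> 1" "Ky y * \<delta> powr \<alpha> < \<epsilon>"
        using small_eta[OF Ky0[OF y] a0 \<epsilon>] by auto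
      show "\<exists>\<delta>>0. \<forall>h\<in>V. N h < \<delta> \<longrightarrow> mnorm V N j (\<lambda>hs. D j (vadd y h) hs - D j y hs - D (Suc j) y (h # hs)) \<le> \<epsilon> * N h"
      proof (intro exI[of _ \<delta>] conjI ballI impI)
        show "0 < \<delta>" by (rule \<delta>(1))
        fix h assume h: "h \<in> V" "N h < \<delta>"
        have Nh0: "0 \<le> N h" using N_nonneg h by auto
        have Nh1: "N h \<le> 1" using h \<delta> by simp
        have yh: "vadd y h \<in> V" using add_in y h by auto
        have key: "Ky y * N h powr \<alpha> * N h \<le> \<epsilon> * N h"
        proof -
          have "N h powr \<alpha> \<le> \<delta> powr \<alpha>" using Nh0 h a0 by (intro powr_mono2) auto
          then have "Ky y * N h powr \<alpha> \<le> Ky y * \<delta> powr \<alpha>" using Ky0[OF y] by (intro mult_left_mono)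
          then have "Ky y * N h powr \<alpha> \<le> \<epsilon>" using \<delta> by linarith
          then show ?thesis using Nh0 by (intro mult_right_mono)
        qed
        show "mnorm V N j (\<lambda>hs. D j (vadd y h) hs - D j y hs - D (Suc j) y (h # hs)) \<le> \<epsilon> * N h"
        proof (rule mnorm_le[OF zero_in])
          show "N (\<lambda>_. 0) \<le> 1" using N_zero by simp
          fix hs assume H: "length hs = j" "set hs \<subseteq> V" "\<forall>h\<in>set hs. N h \<le> 1"
          have P0: "0 \<le> prod_list (map N hs)" using H N_nonneg by (intro prod_list_nonneg) auto
          have P1: "prod_list (map N hs) \<le> 1" using H N_nonneg by (intro prod_list_le1) auto
          have "(\<lambda>m. \<bar>E (s m) j (vadd y h) hs - E (s m) j y hs - E (s m) (Suc j) y (h # hs)\<bar>)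
              \<longlonglongrightarrow> \<bar>D j (vadd y h) hs - D j y hs - D (Suc j) y (h # hs)\<bar>"
            using j H h by (intro tendsto_intros lim y yh) auto
          moreover have "\<forall>m. \<bar>E (s m) j (vadd y h) hs - E (s m) j y hs - E (s m) (Suc j) y (h # hs)\<bar> \<le> \<epsilon> * N h"
          proof
            fix m
            have "\<bar>E (s m) j (vadd y h) hs - E (s m) j y hs - E (s m) (Suc j) y (h # hs)\<bar> \<le> Ky y * N h powr \<alpha> * N h * prod_list (map N hs)"
              by (rule urem[OF j y h(1) Nh1 H(1,2)])
            also have "\<dots> \<le> Ky y * N h powr \<alpha> * N h * 1"
              using P1 Ky0[OF y] Nh0 by (intro mult_left_mono) auto
            also have "\<dots> \<le> \<epsilon> * N h" using key by simp
            finally show "\<bar>E (s m) j (vadd y h) hs - E (s m) j y hs - E (s m) (Suc j) y (h # hs)\<bar> \<le> \<epsilon> * N h" .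
          qed
          ultimately show "\<bar>D j (vadd y h) hs - D j y hs - D (Suc j) y (h # hs)\<bar> \<le> \<epsilon> * N h"
            by (intro LIMSEQ_le_const2) auto
        qed
      qed
    qed
  qed
  have P4: "\<forall>y\<in>V. \<forall>z\<in>V. mnorm V N k (\<lambda>hs. D k y hs - D k z hs) \<le> M * N (vdiff y z) powr \<alpha>"
  proof (intro ballI)
    fix y z assume y: "y \<in> V" and z: "z \<in> V"
    show "mnorm V N k (\<lambda>hs. D k y hs - D k z hs) \<le> M * N (vdiff y z) powr \<alpha>"
    proof (rule mnorm_le[OF zero_in])
      show "N (\<lambda>_. 0) \<le> 1" using N_zero by simp
      fix hs assume H: "length hs = k" "set hs \<subseteq> V" "\<forall>h\<in>set hs. N h \<le> 1"
      have P1: "prod_list (map N hs) \<le> 1" using H N_nonneg by (intro prod_list_le1) auto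
      have "(\<lambda>m. \<bar>E (s m) k y hs - E (s m) k z hs\<bar>) \<longlonglongrightarrow> \<bar>D k y hs - D k z hs\<bar>"
        using H by (intro tendsto_intros lim y z) auto
      moreover have "\<forall>m. \<bar>E (s m) k y hs - E (s m) k z hs\<bar> \<le> M * N (vdiff y z) powr \<alpha>"
      proof
        fix m
        have "\<bar>E (s m) k y hs - E (s m) k z hs\<bar> \<le> M * N (vdiff y z) powr \<alpha> * prod_list (map N hs)"
          by (rule uhol[OF y z H(1,2)])
        also have "\<dots> \<le> M * N (vdiff y z) powr \<alpha> * 1"
          using P1 M0 by (intro mult_left_mono) auto
        finally show "\<bar>E (s m) k y hs - E (s m) k z hs\<bar> \<le> M * N (vdiff y z) powr \<alpha>" by simp
      qed
      ultimately show "\<bar>D k y hs - D k z hs\<bar> \<le> M * N (vdiff y z) powr \<alpha>"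
        by (intro LIMSEQ_le_const2) auto
    qed
  qed
  show ?thesis using s(1) P1 P2 P3 P4 by blast
qed




lemma abs_add_powr_le:
  fixes a b q :: real
  assumes "0 \<le> q"
  shows "\<bar>a + b\<bar> powr q \<le> 2 powr q * (\<bar>a\<bar> powr q + \<bar>b\<bar> powr q)"
proof -
  define m where "m = max \<bar>a\<bar> \<bar>b\<bar>"
  have m0: "0 \<le> m" unfolding m_def by simp
  have "\<bar>a + b\<bar> \<le> 2 * m" unfolding m_def by linarith
  then have "\<bar>a + b\<bar> powr q \<le> (2 * m) powr q" using assms by (intro powr_mono2) auto
  also have "\<dots> = 2 powr q * m powr q" using m0 by (simp add: powr_mult)
  also have "m powr q \<le> \<bar>a\<bar> powr q + \<bar>b\<bar> powr q"
    unfolding m_def by (cases "\<bar>a\<bar> \<le> \<bar>b\<bar>") (auto simp: max_def)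
  then have "2 powr q * m powr q \<le> 2 powr q * (\<bar>a\<bar> powr q + \<bar>b\<bar> powr q)" by (intro mult_left_mono) auto
  finally show ?thesis .
qed

definition Sq :: "real \<Rightarrow> (nat \<Rightarrow> real) \<Rightarrow> real" where "Sq q x = (\<Sum>i. \<bar>x i\<bar> powr q)"

lemma lq_norm_Sq: "lq_norm q x = Sq q x powr (1 / q)" unfolding lq_norm_def Sq_def ..

lemma Sq_nonneg: "x \<in> lq q \<Longrightarrow> 0 \<le> Sq q x"
  unfolding Sq_def lq_def by (intro suminf_nonneg) auto

lemma lq_add_in:
  assumes "0 \<le> q" "x \<in> lq q" "y \<in> lq q"
  shows "vadd x y \<in> lq q"
  unfolding lq_def
proof (simp, rule summable_comparison_test')
  show "summable (\<lambda>i. 2 powr q * (\<bar>x i\<bar> powr q + \<bar>y i\<bar> powr q))"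
    using assms unfolding lq_def by (intro summable_mult summable_add) auto
  show "norm (\<bar>x n + y n\<bar> powr q) \<le> 2 powr q * (\<bar>x n\<bar> powr q + \<bar>y n\<bar> powr q)" for n
    using abs_add_powr_le[OF assms(1)] by simp
qed

lemma lq_scale_in:
  assumes "x \<in> lq q"
  shows "vscale c x \<in> lq q"
proof -
  have "summable (\<lambda>i. \<bar>c\<bar> powr q * \<bar>x i\<bar> powr q)" using assms unfolding lq_def by (intro summable_mult) auto
  then show ?thesis unfolding lq_def by (simp add: abs_mult powr_mult)
qed

lemma lq_zero_in: "(\<lambda>_. 0) \<in> lq q" unfolding lq_def by simp

lemma lq_norm_scale:
  assumes "0 < q" "x \<in> lq q"
  shows "lq_norm q (vscale c x) = \<bar>c\<bar> * lq_norm q x"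
proof -
  have s: "summable (\<lambda>i. \<bar>x i\<bar> powr q)" using assms unfolding lq_def by auto
  have "Sq q (vscale c x) = (\<Sum>i. \<bar>c\<bar> powr q * \<bar>x i\<bar> powr q)"
    unfolding Sq_def by (simp add: abs_mult powr_mult)
  also have "\<dots> = \<bar>c\<bar> powr q * Sq q x" unfolding Sq_def using s by (rule suminf_mult)
  finally have eq: "Sq q (vscale c x) = \<bar>c\<bar> powr q * Sq q x" .
  have "lq_norm q (vscale c x) = (\<bar>c\<bar> powr q) powr (1 / q) * Sq q x powr (1 / q)"
    unfolding lq_norm_Sq eq using Sq_nonneg[OF assms(2)] by (simp add: powr_mult)
  also have "(\<bar>c\<bar> powr q) powr (1 / q) = \<bar>c\<bar>" using assms by (simp add: powr_powr)
  finally show ?thesis unfolding lq_norm_Sq .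
qed

lemma lq_norm_quasi:
  assumes "1 \<le> q" "x \<in> lq q" "y \<in> lq q"
  shows "lq_norm q (vadd x y) \<le> 4 * (lq_norm q x + lq_norm q y)"
proof -
  have q0: "0 < q" using assms by simp
  have sx: "summable (\<lambda>i. \<bar>x i\<bar> powr q)" and sy: "summable (\<lambda>i. \<bar>y i\<bar> powr q)"
    using assms unfolding lq_def by auto
  have sxy: "summable (\<lambda>i. \<bar>x i + y i\<bar> powr q)" using lq_add_in[of q x y] assms unfolding lq_def by auto
  have "Sq q (vadd x y) \<le> (\<Sum>i. 2 powr q * (\<bar>x i\<bar> powr q + \<bar>y i\<bar> powr q))"
    unfolding Sq_def using abs_add_powr_le[of q] q0 sxy sx sy
    by (intro suminf_le summable_mult summable_add) auto
  also have "\<dots> = 2 powr q * (Sq q x + Sq q y)"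
    unfolding Sq_def using sx sy by (simp add: suminf_mult suminf_add summable_add)
  finally have h1: "Sq q (vadd x y) \<le> 2 powr q * (Sq q x + Sq q y)" .
  have Sx0: "0 \<le> Sq q x" and Sy0: "0 \<le> Sq q y" using Sq_nonneg assms by auto
  have Sxy0: "0 \<le> Sq q (vadd x y)" using Sq_nonneg lq_add_in assms by auto
  define m where "m = max (Sq q x) (Sq q y)"
  have m0: "0 \<le> m" unfolding m_def using Sx0 by simp
  have "lq_norm q (vadd x y) \<le> (2 powr q * (Sq q x + Sq q y)) powr (1 / q)"
    unfolding lq_norm_Sq using h1 Sxy0 q0 by (intro powr_mono2) auto
  also have "\<dots> = 2 * (Sq q x + Sq q y) powr (1 / q)"
    using Sx0 Sy0 q0 by (simp add: powr_mult powr_powr)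
  also have "(Sq q x + Sq q y) powr (1 / q) \<le> (2 * m) powr (1 / q)"
    unfolding m_def using Sx0 Sy0 q0 by (intro powr_mono2) auto
  also have "\<dots> = 2 powr (1 / q) * m powr (1 / q)" using m0 by (simp add: powr_mult)
  also have "\<dots> \<le> 2 * (lq_norm q x + lq_norm q y)"
  proof -
    have "2 powr (1 / q) \<le> 2 powr 1" using assms by (intro powr_mono) auto
    then have t: "2 powr (1 / q) \<le> 2" by simp
    have "m powr (1 / q) \<le> lq_norm q x + lq_norm q y"
      unfolding m_def lq_norm_Sq by (cases "Sq q x \<le> Sq q y") (auto simp: max_def)
    then show ?thesis using t by (intro mult_mono) auto
  qed
  finally show ?thesis by linarith
qed

lemma lq_nspace:
  assumes "1 \<le> q"
  shows "nspace (lq q) (lq_norm q)"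
proof
  show "(\<lambda>_. 0) \<in> lq q" by (rule lq_zero_in)
  show "vadd x y \<in> lq q" if "x \<in> lq q" "y \<in> lq q" for x y using lq_add_in assms that by auto
  show "vscale c x \<in> lq q" if "x \<in> lq q" for c x using lq_scale_in that by auto
  show "0 \<le> lq_norm q x" for x unfolding lq_norm_def by simp
  show "lq_norm q (vscale c x) = \<bar>c\<bar> * lq_norm q x" if "x \<in> lq q" for c x
    using lq_norm_scale assms that by auto
  show "lq_norm q (vadd x y) \<le> 4 * (lq_norm q x + lq_norm q y)" if "x \<in> lq q" "y \<in> lq q" for x y
    using lq_norm_quasi assms that by auto
qed

definition emb :: "rat list \<Rightarrow> nat \<Rightarrow> real" where
  "emb xs = (\<lambda>i. if i < length xs then of_rat (xs ! i) else 0)"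

lemma emb_in: "emb xs \<in> lq q"
  unfolding lq_def emb_def mem_Collect_eq
  by (rule summable_finite[of "{..<length xs}"]) auto

lemma lq_dense:
  assumes q: "1 \<le> q" and y: "y \<in> lq q" and e: "0 < e"
  shows "\<exists>y'\<in>range emb. lq_norm q (vdiff y y') < e"
proof -
  have q0: "0 < q" using q by simp
  define t where "t = e powr q"
  have t0: "0 < t" unfolding t_def using e by simp
  have sy: "summable (\<lambda>i. \<bar>y i\<bar> powr q)" using y unfolding lq_def by auto
  obtain n where n: "norm (\<Sum>i. \<bar>y (i + n)\<bar> powr q) < t / 2"
    using suminf_exist_split[of "t / 2" "\<lambda>i. \<bar>y i\<bar> powr q"] t0 sy by auto
  define \<delta> where "\<delta> = (t / (2 * (real n + 1))) powr (1 / q)"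
  have d0: "0 < \<delta>" unfolding \<delta>_def using t0 by simp
  have dq: "\<delta> powr q = t / (2 * (real n + 1))"
    unfolding \<delta>_def using t0 q0 by (simp add: powr_powr)
  have ex: "\<exists>r::rat. \<bar>y i - of_rat r\<bar> < \<delta>" for i
  proof -
    obtain r where r: "r \<in> \<rat>" "y i - \<delta> < r" "r < y i + \<delta>" using Rats_dense_in_real[of "y i - \<delta>" "y i + \<delta>"] d0 by auto
    obtain r' where "r = of_rat r'" using r(1) by (auto elim: Rats_cases)
    then show ?thesis using r by (intro exI[of _ r']) auto
  qed
  define xs where "xs = map (\<lambda>i. SOME r::rat. \<bar>y i - of_rat r\<bar> < \<delta>) [0..<n]"
  have xs: "\<bar>y i - of_rat (xs ! i)\<bar> < \<delta>" if "i < n" for i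
    unfolding xs_def using that someI_ex[OF ex[of i]] by simp
  have lxs: "length xs = n" unfolding xs_def by simp
  define d where "d = vdiff y (emb xs)"
  have dn: "d (i + n) = y (i + n)" for i unfolding d_def emb_def lxs by simp
  have di: "\<bar>d i\<bar> < \<delta>" if "i < n" for i unfolding d_def emb_def using xs[OF that] that lxs by simp
  have sd: "summable (\<lambda>i. \<bar>d i\<bar> powr q)"
  proof -
    have "summable (\<lambda>i. \<bar>y (i + n)\<bar> powr q)" using sy summable_iff_shift[of "\<lambda>i. \<bar>y i\<bar> powr q" n] by simp
    then have "summable (\<lambda>i. \<bar>d (i + n)\<bar> powr q)" unfolding dn .
    then show ?thesis using summable_iff_shift[of "\<lambda>i. \<bar>d i\<bar> powr q" n] by simp
  qed
  have s1: "Sq q d = (\<Sum>i. \<bar>d (i + n)\<bar> powr q) + (\<Sum>i<n. \<bar>d i\<bar> powr q)"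
    unfolding Sq_def using sd by (rule suminf_split_initial_segment)
  have s2: "(\<Sum>i. \<bar>d (i + n)\<bar> powr q) < t / 2" using n unfolding dn real_norm_def by linarith
  have "(\<Sum>i<n. \<bar>d i\<bar> powr q) \<le> (\<Sum>i<n. \<delta> powr q)"
    using di q0 by (intro sum_mono powr_mono2) (auto intro: less_imp_le)
  also have "(\<Sum>i<n. \<delta> powr q) = real n * (t / (2 * (real n + 1)))" unfolding dq by simp
  also have "\<dots> \<le> t / 2"
  proof -
    have "real n / (real n + 1) \<le> 1" by simp
    then have "real n * (t / (2 * (real n + 1))) = (t / 2) * (real n / (real n + 1))" by (simp add: field_simps)
    also have "\<dots> \<le> (t / 2) * 1" using t0 \<open>real n / (real n + 1) \<le> 1\<close> by (intro mult_left_mono) auto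
    finally show ?thesis by simp
  qed
  finally have s3: "(\<Sum>i<n. \<bar>d i\<bar> powr q) \<le> t / 2" .
  have St: "Sq q d < t" using s1 s2 s3 by linarith
  have Sd0: "0 \<le> Sq q d" unfolding Sq_def using sd by (intro suminf_nonneg) auto
  have "lq_norm q d < t powr (1 / q)" unfolding lq_norm_Sq using St Sd0 q0 by (intro powr_less_mono2) auto
  also have "t powr (1 / q) = e" unfolding t_def using e q0 by (simp add: powr_powr)
  finally show ?thesis unfolding d_def by blast
qed

lemma countable_emb: "countable (range emb)" by simp




declare vadd_apply[simp del] vdiff_apply[simp del] vscale_apply[simp del]

definition Pn :: "nat \<Rightarrow> (nat \<Rightarrow> real) \<Rightarrow> (nat \<times> nat \<Rightarrow> real)" where
  "Pn n y = incl_n n (proj_n n y)"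

lemma Pn_apply: "Pn n y (m, i) = (if m = n \<and> i < n then y i else 0)"
  unfolding Pn_def incl_n_def proj_n_def by simp

lemma Pn_vadd: "Pn n (vadd x y) = vadd (Pn n x) (Pn n y)"
  unfolding Pn_def incl_n_def proj_n_def vadd_def by (auto simp: fun_eq_iff split: prod.split)

lemma Pn_vscale: "Pn n (vscale c x) = vscale c (Pn n x)"
  unfolding Pn_def incl_n_def proj_n_def vscale_def by (auto simp: fun_eq_iff split: prod.split)

lemma Pn_vdiff: "Pn n (vdiff x y) = vdiff (Pn n x) (Pn n y)"
  unfolding Pn_def incl_n_def proj_n_def vdiff_def by (auto simp: fun_eq_iff split: prod.split)

lemma Pn_zero: "Pn n (\<lambda>_. 0) = (\<lambda>_. 0)"
  unfolding Pn_def incl_n_def proj_n_def by (auto simp: fun_eq_iff split: prod.split)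

lemma Pn_inner: "(\<Sum>i<m. \<bar>Pn n y (m, i)\<bar> powr q) = (if m = n then (\<Sum>i<n. \<bar>y i\<bar> powr q) else 0)"
  by (simp add: Pn_apply)

lemma Pn_in: "Pn n y \<in> Xsp p q"
  unfolding Xsp_def mem_Collect_eq
proof (intro conjI allI impI)
  fix m i :: nat assume "m \<le> i" then show "Pn n y (m, i) = 0" by (simp add: Pn_apply)
next
  show "summable (\<lambda>m. ((\<Sum>i<m. \<bar>Pn n y (m, i)\<bar> powr q) powr (1 / q)) powr p)"
    by (rule summable_finite[of "{n}"]) (auto simp: Pn_inner)
qed

lemma X_norm_Pn:
  assumes "0 < p"
  shows "X_norm p q (Pn n y) = (\<Sum>i<n. \<bar>y i\<bar> powr q) powr (1 / q)"
proof -
  have "(\<Sum>m. ((\<Sum>i<m. \<bar>Pn n y (m, i)\<bar> powr q) powr (1 / q)) powr p) = (\<Sum>m\<in>{n}. ((\<Sum>i<m. \<bar>Pn n y (m, i)\<bar> powr q) powr (1 / q)) powr p)"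
    by (rule suminf_finite) (auto simp: Pn_inner)
  also have "\<dots> = ((\<Sum>i<n. \<bar>y i\<bar> powr q) powr (1 / q)) powr p" by (simp add: Pn_inner)
  finally have eq: "(\<Sum>m. ((\<Sum>i<m. \<bar>Pn n y (m, i)\<bar> powr q) powr (1 / q)) powr p) = ((\<Sum>i<n. \<bar>y i\<bar> powr q) powr (1 / q)) powr p" .
  have nn: "0 \<le> (\<Sum>i<n. \<bar>y i\<bar> powr q) powr (1 / q)" by simp
  show ?thesis unfolding X_norm_def eq using assms nn by (simp add: powr_powr)
qed

lemma X_norm_Pn_le:
  assumes "0 < p" "0 < q" "y \<in> lq q"
  shows "X_norm p q (Pn n y) \<le> lq_norm q y"
proof -
  have s: "summable (\<lambda>i. \<bar>y i\<bar> powr q)" using assms unfolding lq_def by auto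
  have "(\<Sum>i<n. \<bar>y i\<bar> powr q) \<le> (\<Sum>i. \<bar>y i\<bar> powr q)"
    using s by (intro sum_le_suminf) auto
  then have "(\<Sum>i<n. \<bar>y i\<bar> powr q) powr (1 / q) \<le> (\<Sum>i. \<bar>y i\<bar> powr q) powr (1 / q)"
    using assms by (intro powr_mono2) (auto intro: sum_nonneg)
  then show ?thesis unfolding X_norm_Pn[OF assms(1)] lq_norm_def .
qed

lemma X_norm_nonneg: "0 \<le> X_norm p q x" unfolding X_norm_def by simp

lemma map_Pn_split: "map (Pn n) (as @ vadd (vscale a x) (vscale b z) # bs) = map (Pn n) as @ vadd (vscale a (Pn n x)) (vscale b (Pn n z)) # map (Pn n) bs"
  by (simp add: Pn_vadd Pn_vscale)

lemma transfer:
  fixes D :: "nat \<Rightarrow> (nat \<times> nat \<Rightarrow> real) \<Rightarrow> (nat \<times> nat \<Rightarrow> real) list \<Rightarrow> real"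
  assumes p: "1 < p" and q: "1 < q" and a0: "0 < \<alpha>" and a1: "\<alpha> \<le> 1" and M0: "0 \<le> M"
    and bmlX: "\<And>j y. j \<le> k \<Longrightarrow> y \<in> Xsp p q \<Longrightarrow> bounded_multilinear_on (Xsp p q) (X_norm p q) j (D j y)"
    and derX: "\<And>j y. j < k \<Longrightarrow> y \<in> Xsp p q \<Longrightarrow> has_mderiv_at (Xsp p q) (X_norm p q) j (D j) (D (Suc j) y) y"
    and holX: "\<And>y z. y \<in> Xsp p q \<Longrightarrow> z \<in> Xsp p q \<Longrightarrow> mnorm (Xsp p q) (X_norm p q) k (\<lambda>hs. D k y hs - D k z hs) \<le> M * X_norm p q (vdiff y z) powr \<alpha>"
  shows "smoothdata (lq q) (lq_norm q) k \<alpha> M (\<lambda>j y hs. D j (Pn n y) (map (Pn n) hs))"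
proof -
  have ns: "nspace (lq q) (lq_norm q)" using q by (intro lq_nspace) auto
  interpret nspace "lq q" "lq_norm q" by (rule ns)
  have p0: "0 < p" and q0: "0 < q" using p q by auto
  have comp: "Pn n h \<in> Xsp p q \<and> X_norm p q (Pn n h) \<le> 1" if "h \<in> lq q" "lq_norm q h \<le> 1" for h
    using Pn_in[of n h p q] X_norm_Pn_le[OF p0 q0 that(1), of n] that(2) by linarith
  have z1: "lq_norm q (\<lambda>_. 0) \<le> 1" using N_zero by simp
  show ?thesis
  proof (rule smoothdata.intro[OF ns], rule smoothdata_axioms.intro)
    show "0 < \<alpha>" "\<alpha> \<le> 1" "0 \<le> M" using a0 a1 M0 by auto
  next
    fix j y assume j: "j \<le> k" and y: "y \<in> lq q"
    obtain C where C: "fb (Xsp p q) (X_norm p q) j (D j (Pn n y)) C" and mlX: "multilinear_on (Xsp p q) j (D j (Pn n y))"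
      using bmlX[OF j Pn_in] unfolding bml_iff by blast
    have ml: "multilinear_on (lq q) j (\<lambda>hs. D j (Pn n y) (map (Pn n) hs))"
      unfolding multilinear_on_def
    proof (intro allI impI)
      fix as bs x z a b
      assume H: "length as + length bs + 1 = j \<and> set as \<subseteq> lq q \<and> set bs \<subseteq> lq q \<and> x \<in> lq q \<and> z \<in> lq q"
      have "D j (Pn n y) (map (Pn n) as @ vadd (vscale a (Pn n x)) (vscale b (Pn n z)) # map (Pn n) bs)
          = a * D j (Pn n y) (map (Pn n) as @ Pn n x # map (Pn n) bs) + b * D j (Pn n y) (map (Pn n) as @ Pn n z # map (Pn n) bs)"
        using mlX[unfolded multilinear_on_def, rule_format, of "map (Pn n) as" "map (Pn n) bs" "Pn n x" "Pn n z" a b] H Pn_in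
        by auto
      then show "D j (Pn n y) (map (Pn n) (as @ vadd (vscale a x) (vscale b z) # bs)) =
          a * D j (Pn n y) (map (Pn n) (as @ x # bs)) + b * D j (Pn n y) (map (Pn n) (as @ z # bs))"
        unfolding map_Pn_split by simp
    qed
    have "fb (lq q) (lq_norm q) j (\<lambda>hs. D j (Pn n y) (map (Pn n) hs)) \<bar>C\<bar>"
      unfolding fb_def
    proof (intro allI impI)
      fix hs assume H: "length hs = j \<and> set hs \<subseteq> lq q"
      have "\<bar>D j (Pn n y) (map (Pn n) hs)\<bar> \<le> C * prod_list (map (X_norm p q) (map (Pn n) hs))"
        using C H Pn_in unfolding fb_def by (elim allE[of _ "map (Pn n) hs"]) auto
      also have "\<dots> \<le> \<bar>C\<bar> * prod_list (map (X_norm p q) (map (Pn n) hs))"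
        using X_norm_nonneg by (intro mult_right_mono prod_list_nonneg) auto
      also have "\<dots> \<le> \<bar>C\<bar> * prod_list (map (lq_norm q) hs)"
        unfolding map_map comp_def
        using H X_norm_Pn_le[OF p0 q0] X_norm_nonneg by (intro mult_left_mono prod_list_mono) auto
      finally show "\<bar>D j (Pn n y) (map (Pn n) hs)\<bar> \<le> \<bar>C\<bar> * prod_list (map (lq_norm q) hs)" .
    qed
    then show "bounded_multilinear_on (lq q) (lq_norm q) j (\<lambda>hs. D j (Pn n y) (map (Pn n) hs))"
      using ml unfolding bml_iff by blast
  next
    fix j y assume j: "j < k" and y: "y \<in> lq q"
    have jk: "j \<le> k" "Suc j \<le> k" using j by auto
    show "has_mderiv_at (lq q) (lq_norm q) j (\<lambda>y hs. D j (Pn n y) (map (Pn n) hs)) (\<lambda>hs. D (Suc j) (Pn n y) (map (Pn n) hs)) y"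
      unfolding has_mderiv_at_def
    proof (intro allI impI)
      fix \<epsilon> :: real assume \<epsilon>: "0 < \<epsilon>"
      obtain \<delta> where \<delta>: "0 < \<delta>" and Hd: "\<And>h. h \<in> Xsp p q \<Longrightarrow> X_norm p q h < \<delta> \<Longrightarrow>
          mnorm (Xsp p q) (X_norm p q) j (\<lambda>hs. D j (vadd (Pn n y) h) hs - D j (Pn n y) hs - D (Suc j) (Pn n y) (h # hs)) \<le> \<epsilon> * X_norm p q h"
        using derX[OF j Pn_in] \<epsilon> unfolding has_mderiv_at_def by blast
      have main: "mnorm (lq q) (lq_norm q) j (\<lambda>hs. D j (Pn n (vadd y h)) (map (Pn n) hs) - D j (Pn n y) (map (Pn n) hs) - D (Suc j) (Pn n y) (map (Pn n) (h # hs))) \<le> \<epsilon> * lq_norm q h"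
        if h: "h \<in> lq q" "lq_norm q h < \<delta>" for h
      proof -
        let ?T = "\<lambda>hs. D j (vadd (Pn n y) (Pn n h)) hs - D j (Pn n y) hs - D (Suc j) (Pn n y) (Pn n h # hs)"
        have le: "X_norm p q (Pn n h) \<le> lq_norm q h" by (rule X_norm_Pn_le[OF p0 q0 h(1)])
        have m1: "mnorm (Xsp p q) (X_norm p q) j ?T \<le> \<epsilon> * X_norm p q (Pn n h)"
          using le h by (intro Hd[OF Pn_in]) linarith
        have vin: "vadd (Pn n y) (Pn n h) \<in> Xsp p q" unfolding Pn_vadd[symmetric] by (rule Pn_in)
        have "bounded_multilinear_on (Xsp p q) (X_norm p q) j ?T"
          by (intro bml_diff3 bml_cons bmlX jk vin Pn_in)
        then obtain C where C: "fb (Xsp p q) (X_norm p q) j ?T C" unfolding bml_iff by blast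
        have m2: "mnorm (lq q) (lq_norm q) j (\<lambda>hs. ?T (map (Pn n) hs)) \<le> mnorm (Xsp p q) (X_norm p q) j ?T"
          by (rule mnorm_comp_le[where W="lq q" and N'="lq_norm q" and P="Pn n", OF C X_norm_nonneg zero_in z1 comp])
        have eq: "(\<lambda>hs. ?T (map (Pn n) hs)) = (\<lambda>hs. D j (Pn n (vadd y h)) (map (Pn n) hs) - D j (Pn n y) (map (Pn n) hs) - D (Suc j) (Pn n y) (map (Pn n) (h # hs)))"
          by (simp add: Pn_vadd)
        have "\<epsilon> * X_norm p q (Pn n h) \<le> \<epsilon> * lq_norm q h" using le \<epsilon> by (intro mult_left_mono) auto
        then show ?thesis using m1 m2 unfolding eq by linarith
      qed
      show "\<exists>\<delta>>0. \<forall>h\<in>lq q. lq_norm q h < \<delta> \<longrightarrow>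
          mnorm (lq q) (lq_norm q) j (\<lambda>hs. D j (Pn n (vadd y h)) (map (Pn n) hs) - D j (Pn n y) (map (Pn n) hs) - D (Suc j) (Pn n y) (map (Pn n) (h # hs))) \<le> \<epsilon> * lq_norm q h"
        using main \<delta> by blast
    qed
  next
    fix y z assume y: "y \<in> lq q" and z: "z \<in> lq q"
    let ?T = "\<lambda>hs. D k (Pn n y) hs - D k (Pn n z) hs"
    have "bounded_multilinear_on (Xsp p q) (X_norm p q) k ?T"
      by (intro bml_diff2 bmlX order_refl Pn_in)
    then obtain C where C: "fb (Xsp p q) (X_norm p q) k ?T C" unfolding bml_iff by blast
    have m2: "mnorm (lq q) (lq_norm q) k (\<lambda>hs. ?T (map (Pn n) hs)) \<le> mnorm (Xsp p q) (X_norm p q) k ?T"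
      by (rule mnorm_comp_le[where W="lq q" and N'="lq_norm q" and P="Pn n", OF C X_norm_nonneg zero_in z1 comp])
    have m1: "mnorm (Xsp p q) (X_norm p q) k ?T \<le> M * X_norm p q (vdiff (Pn n y) (Pn n z)) powr \<alpha>"
      by (rule holX[OF Pn_in Pn_in])
    have dz: "vdiff y z \<in> lq q" using diff_in y z by auto
    have "X_norm p q (vdiff (Pn n y) (Pn n z)) powr \<alpha> \<le> lq_norm q (vdiff y z) powr \<alpha>"
      unfolding Pn_vdiff[symmetric] using X_norm_Pn_le[OF p0 q0 dz] X_norm_nonneg a0
      by (intro powr_mono2) auto
    then have "M * X_norm p q (vdiff (Pn n y) (Pn n z)) powr \<alpha> \<le> M * lq_norm q (vdiff y z) powr \<alpha>"
      using M0 by (intro mult_left_mono)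
    then show "mnorm (lq q) (lq_norm q) k (\<lambda>hs. D k (Pn n y) (map (Pn n) hs) - D k (Pn n z) (map (Pn n) hs)) \<le> M * lq_norm q (vdiff y z) powr \<alpha>"
      using m1 m2 by simp
  qed
qed




theorem proposition3p4:
  fixes p q r :: real
    and F :: "(nat \<times> nat \<Rightarrow> real) \<Rightarrow> real"
  assumes "1 < p" and "1 < q" and "1 < r"
    and "uniformly_H_smooth (Xsp p q) (X_norm p q) r F"
  shows "\<exists>(s :: nat \<Rightarrow> nat) (Fstar :: (nat \<Rightarrow> real) \<Rightarrow> real).
           strict_mono s
         \<and> (\<forall>y\<in>lq q. (\<lambda>j. F (incl_n (s j) (proj_n (s j) y))) \<longlonglongrightarrow> Fstar y)
         \<and> uniformly_H_smooth (lq q) (lq_norm q) r Fstar"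
proof -
  define k where "k = nat (\<lceil>r\<rceil> - 1)"
  obtain D :: "nat \<Rightarrow> (nat \<times> nat \<Rightarrow> real) \<Rightarrow> (nat \<times> nat \<Rightarrow> real) list \<Rightarrow> real" and M where
    M: "M > 0" and D0: "\<forall>y\<in>Xsp p q. D 0 y [] = F y"
    and bmlX: "\<forall>j\<le>k. \<forall>y\<in>Xsp p q. bounded_multilinear_on (Xsp p q) (X_norm p q) j (D j y)"
    and derX: "\<forall>j<k. \<forall>y\<in>Xsp p q. has_mderiv_at (Xsp p q) (X_norm p q) j (D j) (D (Suc j) y) y"
    and holX: "\<forall>y\<in>Xsp p q. \<forall>z\<in>Xsp p q. mnorm (Xsp p q) (X_norm p q) k (\<lambda>hs. D k y hs - D k z hs) \<le> M * X_norm p q (vdiff y z) powr (r - real k)"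
    using assms(4) unfolding uniformly_H_smooth_def Let_def k_def[symmetric]
    apply (elim exE conjE)
    apply (rule that)
    by assumption+
  define \<alpha> where "\<alpha> = r - real k"
  have "1 < \<lceil>r\<rceil>" using assms(3) by simp
  then have c2: "2 \<le> \<lceil>r\<rceil>" by linarith
  have kr: "real k = real_of_int \<lceil>r\<rceil> - 1" unfolding k_def using c2 by simp
  have a0: "0 < \<alpha>" unfolding \<alpha>_def kr using ceiling_correct[of r] by linarith
  have a1: "\<alpha> \<le> 1" unfolding \<alpha>_def kr using le_of_int_ceiling[of r] by simp
  have p1: "1 < p" and q1: "1 < q" using assms by auto
  define E where "E = (\<lambda>n j y hs. D j (Pn n y) (map (Pn n) hs))"
  have sd: "smoothdata (lq q) (lq_norm q) k \<alpha> M (E n)" for n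
    unfolding E_def
    by (rule transfer[OF p1 q1 a0 a1 less_imp_le[OF M]]) (use bmlX derX holX in \<open>auto simp: \<alpha>_def\<close>)
  have ns: "nspace (lq q) (lq_norm q)" using q1 by (intro lq_nspace) auto
  interpret nspace "lq q" "lq_norm q" by (rule ns)
  define c where "c = (\<Sum>j\<le>k. \<bar>mnorm (Xsp p q) (X_norm p q) j (D j (\<lambda>_. 0))\<bar>)"
  have c0: "0 \<le> c" unfolding c_def by (intro sum_nonneg) auto
  have cb: "fb (lq q) (lq_norm q) j (E n j (\<lambda>_. 0)) c" if j: "j \<le> k" for n j
  proof -
    interpret S: smoothdata "lq q" "lq_norm q" k \<alpha> M "E n" by (rule sd)
    obtain C where C: "fb (Xsp p q) (X_norm p q) j (D j (Pn n (\<lambda>_. 0))) C"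
      using bmlX j Pn_in unfolding bml_iff by blast
    have z1: "lq_norm q (\<lambda>_. 0) \<le> 1" using N_zero by simp
    have comp: "Pn n h \<in> Xsp p q \<and> X_norm p q (Pn n h) \<le> 1" if "h \<in> lq q" "lq_norm q h \<le> 1" for h
      using Pn_in[of n h p q] X_norm_Pn_le[of p q h n] that p1 q1 by auto
    have "mnorm (lq q) (lq_norm q) j (E n j (\<lambda>_. 0)) \<le> mnorm (Xsp p q) (X_norm p q) j (D j (Pn n (\<lambda>_. 0)))"
      unfolding E_def
      by (rule mnorm_comp_le[where W="lq q" and N'="lq_norm q" and P="Pn n", OF C X_norm_nonneg zero_in z1 comp])
    also have "\<dots> = mnorm (Xsp p q) (X_norm p q) j (D j (\<lambda>_. 0))" unfolding Pn_zero ..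
    also have "\<dots> \<le> c"
    proof -
      have m: "\<bar>mnorm (Xsp p q) (X_norm p q) j (D j (\<lambda>_. 0))\<bar> \<le> c"
        unfolding c_def using j by (intro member_le_sum[where f="\<lambda>j. \<bar>mnorm (Xsp p q) (X_norm p q) j (D j (\<lambda>_. 0))\<bar>"]) auto
      then show ?thesis using abs_ge_self[of "mnorm (Xsp p q) (X_norm p q) j (D j (\<lambda>_. 0))"] by linarith
    qed
    finally show ?thesis by (intro fb_of_mnorm S.bml j zero_in)
  qed
  have Qd: "\<And>y e. y \<in> lq q \<Longrightarrow> 0 < e \<Longrightarrow> \<exists>y'\<in>range emb. lq_norm q (vdiff y y') < e"
    using lq_dense q1 by auto
  have QV: "range emb \<subseteq> lq q" using emb_in by auto
  have cr: "\<exists>s Dst. strict_mono s \<and>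
     (\<forall>j\<le>k. \<forall>y\<in>lq q. \<forall>hs. length hs = j \<and> set hs \<subseteq> lq q \<longrightarrow> (\<lambda>m. E (s m) j y hs) \<longlonglongrightarrow> Dst j y hs) \<and>
     (\<forall>j\<le>k. \<forall>y\<in>lq q. bounded_multilinear_on (lq q) (lq_norm q) j (Dst j y)) \<and>
     (\<forall>j<k. \<forall>y\<in>lq q. has_mderiv_at (lq q) (lq_norm q) j (Dst j) (Dst (Suc j) y) y) \<and>
     (\<forall>y\<in>lq q. \<forall>z\<in>lq q. mnorm (lq q) (lq_norm q) k (\<lambda>hs. Dst k y hs - Dst k z hs) \<le> M * lq_norm q (vdiff y z) powr \<alpha>)"
    apply (rule core[where V="lq q" and N="lq_norm q" and Q="range emb" and E=E and k=k and \<alpha>=\<alpha> and M=M and c=c])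
    using ns QV Qd sd c0 cb by auto
  obtain s Dst where s: "strict_mono s"
    and lim: "\<forall>j\<le>k. \<forall>y\<in>lq q. \<forall>hs. length hs = j \<and> set hs \<subseteq> lq q \<longrightarrow> (\<lambda>m. E (s m) j y hs) \<longlonglongrightarrow> Dst j y hs"
    and P2: "\<forall>j\<le>k. \<forall>y\<in>lq q. bounded_multilinear_on (lq q) (lq_norm q) j (Dst j y)"
    and P3: "\<forall>j<k. \<forall>y\<in>lq q. has_mderiv_at (lq q) (lq_norm q) j (Dst j) (Dst (Suc j) y) y"
    and P4: "\<forall>y\<in>lq q. \<forall>z\<in>lq q. mnorm (lq q) (lq_norm q) k (\<lambda>hs. Dst k y hs - Dst k z hs) \<le> M * lq_norm q (vdiff y z) powr \<alpha>"
    using cr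
    apply (elim exE conjE)
    apply (rule that)
    by assumption+
  show ?thesis
  proof (intro exI[of _ s] exI[of _ "\<lambda>y. Dst 0 y []"] conjI s ballI)
    fix y assume y: "y \<in> lq q"
    have "(\<lambda>m. E (s m) 0 y []) \<longlonglongrightarrow> Dst 0 y []" using lim y by auto
    moreover have "E (s m) 0 y [] = F (incl_n (s m) (proj_n (s m) y))" for m
      unfolding E_def using D0 Pn_in by (simp add: Pn_def)
    ultimately show "(\<lambda>j. F (incl_n (s j) (proj_n (s j) y))) \<longlonglongrightarrow> Dst 0 y []" by simp
  next
    show "uniformly_H_smooth (lq q) (lq_norm q) r (\<lambda>y. Dst 0 y [])"
      unfolding uniformly_H_smooth_def Let_def k_def[symmetric]
    proof (intro exI[of _ Dst] exI[of _ M] conjI)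
      show "0 < M" by (rule M)
      show "\<forall>y\<in>lq q. Dst 0 y [] = Dst 0 y []" by simp
      show "\<forall>j\<le>k. \<forall>y\<in>lq q. bounded_multilinear_on (lq q) (lq_norm q) j (Dst j y)" by (rule P2)
      show "\<forall>j<k. \<forall>y\<in>lq q. has_mderiv_at (lq q) (lq_norm q) j (Dst j) (Dst (Suc j) y) y" by (rule P3)
      show "\<forall>y\<in>lq q. \<forall>z\<in>lq q. mnorm (lq q) (lq_norm q) k (\<lambda>hs. Dst k y hs - Dst k z hs) \<le> M * lq_norm q (vdiff y z) powr (r - real k)"
        using P4 unfolding \<alpha>_def .
    qed
  qed
qed



end
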